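(* Let $B$ be a finite brace such that every Sylow subgroup of the additive group $(B,+)$ and every Sylow subgroup of the multiplicative group $(B,\cdot)$ is cyclic. Then $B$ is supersoluble.
   Context: A brace (skew left brace) is a set $B$ with two binary operations $+$ and $\cdot$ (the product written by juxtaposition) such that $(B,+)$ and $(B,\cdot)$ are groups and $a(b+c)=ab-a+ac$ for all $a,b,c\in B$; the two groups have the same identity $0$. For $a,b\in B$ put $\lambda_a(b)=-a+ab$; then $\lambda\colon (B,\cdot)\to\operatorname{Aut}(B,+)$, $a\mapsto\lambda_a$, is a group homomorphism. A subbrace is a subset that is a subgroup of both $(B,+)$ and $(B,\cdot)$. An ideal of $B$ is a subbrace $I$ that is normal in $(B,+)$ and in $(B,\cdot)$ and satisfies $\lambda_b(I)\subseteq I$ for all $b\in B$; then $B/I$ is naturally a brace. $\operatorname{Soc}(B)=\operatorname{Ker}\lambda\cap Z(B,+)$, an ideal. A brace $B$ is supersoluble if there is a finite chain of ideals $\{0\}=I_0\le I_1\le\dots\le I_n=B$ of $B$ such that for each $0\le i<n$, either $(I_{i+1}/I_i,+)$ is infinite cyclic and $I_{i+1}/I_i\le\operatorname{Soc}(B/I_i)$, or $I_{i+1}/I_i$ has prime order. *)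

theory Defs
  imports "HOL-Algebra.Algebra" "HOL-Computational_Algebra.Primes"
begin

text \<open>A (skew left) brace is given by two group structures A (the additive group,
  whose operation is written with the HOL-Algebra multiplication symbol) and M
  (the multiplicative group) on the same carrier, with the same identity, and
  satisfying a(b+c) = ab - a + ac.\<close>

definition brace :: "'a monoid \<Rightarrow> 'a monoid \<Rightarrow> bool" where
  "brace A M \<longleftrightarrow> group A \<and> group M \<and> carrier A = carrier M \<and> \<one>\<^bsub>A\<^esub> = \<one>\<^bsub>M\<^esub> \<and>
     (\<forall>a\<in>carrier A. \<forall>b\<in>carrier A. \<forall>c\<in>carrier A.
        a \<otimes>\<^bsub>M\<^esub> (b \<otimes>\<^bsub>A\<^esub> c) = (a \<otimes>\<^bsub>M\<^esub> b) \<otimes>\<^bsub>A\<^esub> inv\<^bsub>A\<^esub> a \<otimes>\<^bsub>A\<^esub> (a \<otimes>\<^bsub>M\<^esub> c))"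

definition brace_lambda :: "'a monoid \<Rightarrow> 'a monoid \<Rightarrow> 'a \<Rightarrow> 'a \<Rightarrow> 'a" where
  "brace_lambda A M a b = inv\<^bsub>A\<^esub> a \<otimes>\<^bsub>A\<^esub> (a \<otimes>\<^bsub>M\<^esub> b)"

definition brace_ideal :: "'a monoid \<Rightarrow> 'a monoid \<Rightarrow> 'a set \<Rightarrow> bool" where
  "brace_ideal A M I \<longleftrightarrow> subgroup I A \<and> subgroup I M \<and> normal I A \<and> normal I M \<and>
     (\<forall>b\<in>carrier A. brace_lambda A M b ` I \<subseteq> I)"

definition brace_socle :: "'a monoid \<Rightarrow> 'a monoid \<Rightarrow> 'a set" where
  "brace_socle A M = {a \<in> carrier A. (\<forall>b\<in>carrier A. brace_lambda A M a b = b) \<and>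
                                    (\<forall>b\<in>carrier A. a \<otimes>\<^bsub>A\<^esub> b = b \<otimes>\<^bsub>A\<^esub> a)}"

text \<open>The quotient brace B/I is (A Mod I, M Mod I); for an ideal I the cosets of I
  in both groups coincide.\<close>
definition factor_cosets :: "'a monoid \<Rightarrow> 'a set \<Rightarrow> 'a set \<Rightarrow> 'a set set" where
  "factor_cosets A I J = (\<lambda>x. I #>\<^bsub>A\<^esub> x) ` J"

definition brace_supersoluble :: "'a monoid \<Rightarrow> 'a monoid \<Rightarrow> bool" where
  "brace_supersoluble A M \<longleftrightarrow>
     (\<exists>(I :: nat \<Rightarrow> 'a set) n.
        I 0 = {\<one>\<^bsub>A\<^esub>} \<and> I n = carrier A \<and>
        (\<forall>i\<le>n. brace_ideal A M (I i)) \<and>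
        (\<forall>i<n. I i \<subseteq> I (Suc i)) \<and>
        (\<forall>i<n. let Q = factor_cosets A (I i) (I (Suc i)) in
           (infinite Q \<and> cyclic_group (subgroup_generated (A Mod (I i)) Q) \<and>
              Q \<subseteq> brace_socle (A Mod (I i)) (M Mod (I i)))
           \<or> Factorial_Ring.prime (card Q)))"

definition sylow_subgroup :: "('a, 'b) monoid_scheme \<Rightarrow> nat \<Rightarrow> 'a set \<Rightarrow> bool" where
  "sylow_subgroup G p P \<longleftrightarrow> Factorial_Ring.prime p \<and> subgroup P G \<and>
     card P = p ^ multiplicity p (order G)"

end

theory Submission
  imports Defs "HOL-Number_Theory.Number_Theory"
begin

lemma nt_key:
  fixes p b k e :: nat
  assumes p: "Factorial_Ring.prime p" and k: "k > 0"
    and kp: "\<forall>r. Factorial_Ring.prime r \<longrightarrow> r dvd k \<longrightarrow> p < r"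
    and ek: "[e ^ k = 1] (mod p ^ b)" and ep: "coprime e p"
  shows "[e = 1] (mod p ^ b)"
proof (cases "b = 0")
  case True then show ?thesis by simp
next
  case False
  define t where "t = totient (p ^ b)"
  have t: "t = p ^ (b - 1) * (p - 1)" using False p by (simp add: t_def totient_prime_power)
  have et: "[e ^ t = 1] (mod p ^ b)" unfolding t_def
    using euler_theorem[of e "p ^ b"] ep by simp
  have cop: "coprime k t"
  proof (rule ccontr)
    assume "\<not> coprime k t"
    then have "gcd k t \<noteq> 1" by (metis coprime_iff_gcd_eq_1)
    then obtain r where r: "Factorial_Ring.prime r" "r dvd gcd k t" using prime_factor_nat by blast
    then have rk: "r dvd k" and rt: "r dvd p ^ (b - 1) * (p - 1)" using t by auto
    have "p < r" using kp r rk by blast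
    from rt r(1) have "r dvd p ^ (b - 1) \<or> r dvd (p - 1)" by (simp add: prime_dvd_mult_iff)
    then show False
    proof
      assume "r dvd p ^ (b - 1)"
      then have "r dvd p" using r(1) prime_dvd_power by blast
      then have "r = p" using r(1) p by (simp add: primes_dvd_imp_eq)
      with \<open>p < r\<close> show False by simp
    next
      assume "r dvd p - 1"
      moreover have "p - 1 > 0" using p prime_gt_1_nat by auto
      ultimately have "r \<le> p - 1" by (simp add: dvd_imp_le)
      with \<open>p < r\<close> show False by simp
    qed
  qed
  obtain x y where xy: "k * x = t * y + gcd k t" using bezout_nat[of k t] k by auto
  then have xy': "k * x = t * y + 1" using cop by (metis coprime_iff_gcd_eq_1)
  have "[e ^ (k * x) = 1] (mod p ^ b)"
    using cong_pow[OF ek, of x] by (simp add: power_mult)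
  moreover have "[e ^ (t * y + 1) = e] (mod p ^ b)"
  proof -
    have "[(e ^ t) ^ y * e = 1 ^ y * e] (mod p ^ b)"
      by (intro cong_mult cong_pow et cong_refl)
    then show ?thesis by (simp add: power_add power_mult ac_simps)
  qed
  ultimately show ?thesis using xy' by (metis cong_sym cong_trans)
qed

context group begin

lemma inv_mult_cancel_left [simp]:
  "x \<in> carrier G \<Longrightarrow> y \<in> carrier G \<Longrightarrow> inv x \<otimes> (x \<otimes> y) = y"
  by (simp add: m_assoc[symmetric])

lemma mult_inv_cancel_left [simp]:
  "x \<in> carrier G \<Longrightarrow> y \<in> carrier G \<Longrightarrow> x \<otimes> (inv x \<otimes> y) = y"
  by (simp add: m_assoc[symmetric])

lemma conj_pow:
  assumes "t \<in> carrier G" "y \<in> carrier G"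
  shows "(t \<otimes> y \<otimes> inv t) [^] (n::nat) = t \<otimes> y [^] n \<otimes> inv t"
proof (induction n)
  case 0 then show ?case using assms by simp
next
  case (Suc n)
  have "(t \<otimes> y \<otimes> inv t) [^] Suc n = (t \<otimes> y [^] n \<otimes> inv t) \<otimes> (t \<otimes> y \<otimes> inv t)"
    using Suc assms by simp
  also have "\<dots> = t \<otimes> (y [^] n \<otimes> y) \<otimes> inv t"
    using assms by (simp add: m_assoc)
  finally show ?case using assms by (simp add: nat_pow_Suc)
qed

lemma conj_eq_one_iff:
  assumes "t \<in> carrier G" "z \<in> carrier G"
  shows "t \<otimes> z \<otimes> inv t = \<one> \<longleftrightarrow> z = \<one>"
proof
  assume "t \<otimes> z \<otimes> inv t = \<one>"
  then have "inv t \<otimes> (t \<otimes> z \<otimes> inv t) \<otimes> t = inv t \<otimes> \<one> \<otimes> t" by simp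
  moreover have "inv t \<otimes> (t \<otimes> z \<otimes> inv t) \<otimes> t = z"
    using assms by (simp add: m_assoc)
  ultimately show "z = \<one>" using assms by simp
qed (use assms in simp)

lemma ord_conj:
  assumes "t \<in> carrier G" "y \<in> carrier G"
  shows "ord (t \<otimes> y \<otimes> inv t) = ord y"
proof -
  have "\<forall>n. (t \<otimes> y \<otimes> inv t) [^] n = \<one> \<longleftrightarrow> ord y dvd n"
    using assms by (simp add: conj_pow conj_eq_one_iff pow_eq_id)
  then show ?thesis using assms ord_unique by (meson m_closed inv_closed)
qed

lemma cyc_card:
  assumes fin: "finite (carrier G)" and g: "g \<in> carrier G"
  shows "card (range (\<lambda>i::nat. g [^] i)) = ord g"
proof -
  have "range (\<lambda>i::nat. g [^] i) = (\<lambda>i. g [^] i) ` {0 .. ord g - 1}"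
  proof -
    have "{g [^] x | x. x \<in> (UNIV :: nat set)} = {g [^] x | x. x \<in> {0 .. ord g - 1}}"
      using ord_elems[OF fin g] .
    then show ?thesis by (auto simp: image_def)
  qed
  moreover have "card ((\<lambda>i::nat. g [^] i) ` {0 .. ord g - 1}) = ord g"
    using card_image[OF ord_inj[OF g]] ord_ge_1[OF fin g] by simp
  ultimately show ?thesis by simp
qed

lemma cyc_same_ord_power:
  assumes fin: "finite (carrier G)" and g: "g \<in> carrier G"
    and u: "u \<in> range (\<lambda>i::nat. g [^] i)" and v: "v \<in> range (\<lambda>i::nat. g [^] i)"
    and o: "ord u = ord v"
  shows "\<exists>e::nat. v = u [^] e"
proof -
  obtain \<alpha> :: nat where a: "u = g [^] \<alpha>" using u by blast
  obtain \<beta> :: nat where b: "v = g [^] \<beta>" using v by blast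
  define N where "N = ord g"
  have N0: "N > 0" using ord_ge_1[OF fin g] N_def by simp
  show ?thesis
  proof (cases "\<alpha> = 0 \<or> \<beta> = 0")
    case True
    then have "u = \<one> \<and> v = \<one>"
      using o a b g by (auto simp: ord_eq_1[symmetric])
    then show ?thesis by (metis nat_pow_0)
  next
    case False
    then have ne: "\<alpha> \<noteq> 0" "\<beta> \<noteq> 0" by auto
    have "N div gcd N \<alpha> = N div gcd N \<beta>"
      using o a b g ne by (simp add: ord_pow_gen N_def)
    then have dg: "gcd N \<alpha> = gcd N \<beta>"
    proof -
      assume q: "N div gcd N \<alpha> = N div gcd N \<beta>"
      have e1: "gcd N \<alpha> * (N div gcd N \<alpha>) = N" by simp
      have e2: "gcd N \<beta> * (N div gcd N \<beta>) = N" by simp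
      have "N div gcd N \<alpha> > 0" using N0 e1 by (metis gr0I mult_0_right)
      then show ?thesis using e1 e2 q by (metis mult_right_cancel neq0_conv)
    qed
    define \<delta> where "\<delta> = gcd N \<alpha>"
    have d0: "\<delta> > 0" using ne \<delta>_def by simp
    obtain \<alpha>' where a': "\<alpha> = \<delta> * \<alpha>'" unfolding \<delta>_def by (meson dvdE gcd_dvd2)
    obtain \<beta>' where b': "\<beta> = \<delta> * \<beta>'" unfolding \<delta>_def dg by (meson dvdE gcd_dvd2)
    obtain N' where N': "N = \<delta> * N'" unfolding \<delta>_def by (meson dvdE gcd_dvd1)
    have "gcd N \<alpha> = \<delta> * gcd N' \<alpha>'" using a' N' by (simp add: gcd_mult_distrib_nat)
    then have "\<delta> * gcd N' \<alpha>' = \<delta> * 1" using \<delta>_def by (metis mult.right_neutral)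
    then have "gcd N' \<alpha>' = 1" using d0 by (metis mult_left_cancel neq0_conv)
    then have g1: "gcd \<alpha>' N' = 1" by (simp add: gcd.commute)
    have a0: "\<alpha>' \<noteq> 0" using ne a' by simp
    obtain x y where xy: "\<alpha>' * x = N' * y + gcd \<alpha>' N'" using bezout_nat[OF a0] by blast
    then have xy': "\<alpha>' * x = N' * y + 1" using g1 by simp
    have "\<alpha> * (x * \<beta>') = N * (y * \<beta>') + \<beta>"
    proof -
      have "\<alpha> * (x * \<beta>') = \<delta> * (\<alpha>' * x) * \<beta>'" using a' by (simp add: ac_simps)
      also have "\<dots> = \<delta> * (N' * y + 1) * \<beta>'" using xy' by simp
      also have "\<dots> = N * (y * \<beta>') + \<beta>" using N' b' by (simp add: algebra_simps)
      finally show ?thesis .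
    qed
    then have "u [^] (x * \<beta>') = v"
    proof -
      assume eq: "\<alpha> * (x * \<beta>') = N * (y * \<beta>') + \<beta>"
      have "u [^] (x * \<beta>') = g [^] (\<alpha> * (x * \<beta>'))" using a g by (simp add: nat_pow_pow)
      also have "\<dots> = g [^] (N * (y * \<beta>')) \<otimes> g [^] \<beta>" using eq g by (simp add: nat_pow_mult)
      also have "g [^] (N * (y * \<beta>')) = \<one>" using g by (simp add: pow_eq_id N_def)
      finally show ?thesis using b g by simp
    qed
    then show ?thesis by metis
  qed
qed

end

context group begin

lemma rc_sub: "C \<in> rcosets H \<Longrightarrow> H \<subseteq> carrier G \<Longrightarrow> C \<subseteq> carrier G"
  by (auto simp: RCOSETS_def r_coset_def)

lemma rc_closed:
  assumes "C \<in> rcosets H" "x \<in> carrier G" "H \<subseteq> carrier G"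
  shows "C #> x \<in> rcosets H"
proof -
  obtain a where a: "a \<in> carrier G" "C = H #> a" using assms(1) by (auto simp: RCOSETS_def)
  have "C #> x = H #> (a \<otimes> x)"
    using a assms(2,3) by (simp add: coset_mult_assoc)
  then show ?thesis using a assms(2) by (auto simp: RCOSETS_def)
qed

lemma rc_assoc:
  assumes "C \<in> rcosets H" "H \<subseteq> carrier G" "x \<in> carrier G" "y \<in> carrier G"
  shows "(C #> x) #> y = C #> (x \<otimes> y)"
  using coset_mult_assoc rc_sub assms by blast

lemma rc_one:
  assumes "C \<in> rcosets H" "H \<subseteq> carrier G"
  shows "C #> \<one> = C"
  using coset_mult_one rc_sub assms by blast

lemma rc_pow_add:
  assumes "C \<in> rcosets H" "H \<subseteq> carrier G" "x \<in> carrier G"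
  shows "C #> x [^] (i + j :: nat) = (C #> x [^] i) #> x [^] j"
  using assms by (simp add: rc_assoc nat_pow_mult)

lemma rc_pow_closed:
  assumes "C \<in> rcosets H" "x \<in> carrier G" "H \<subseteq> carrier G"
  shows "C #> x [^] (i::nat) \<in> rcosets H"
  using assms by (simp add: rc_closed)

lemma rc_cancel:
  assumes "C \<in> rcosets H" "H \<subseteq> carrier G" "a \<in> carrier G" "b \<in> carrier G"
    and "C #> a = C #> b"
  shows "C #> (a \<otimes> inv b) = C"
proof -
  have "C #> (a \<otimes> inv b) = (C #> a) #> inv b" using rc_assoc[OF assms(1,2,3)] assms(4) by simp
  also have "\<dots> = (C #> b) #> inv b" using assms by simp
  also have "\<dots> = C #> (b \<otimes> inv b)" using rc_assoc[OF assms(1,2,4)] assms(4) by simp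
  also have "\<dots> = C" using rc_one[OF assms(1,2)] assms(4) by simp
  finally show ?thesis .
qed

lemma pow_diff_inv:
  assumes "x \<in> carrier G" "i \<le> j"
  shows "x [^] (j::nat) \<otimes> inv (x [^] i) = x [^] (j - i)"
proof -
  have "x [^] j = x [^] (j - i) \<otimes> x [^] i" using assms by (simp add: nat_pow_mult)
  then show ?thesis using assms by (simp add: m_assoc)
qed

definition per :: "'a set \<Rightarrow> 'a \<Rightarrow> nat" where
  "per C x = (LEAST r. 0 < r \<and> C #> x [^] r = C)"

context
  fixes H C x
  assumes fin: "finite (carrier G)" and HG: "H \<subseteq> carrier G"
    and C: "C \<in> rcosets H" and x: "x \<in> carrier G"
begin

lemmas xc [simp] = x

lemma per_ex: "0 < ord x \<and> C #> x [^] ord x = C"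
  using ord_ge_1[OF fin x] x C HG by (simp add: rc_one)

lemma per_pos: "0 < per C x" and per_eq: "C #> x [^] per C x = C"
proof -
  have "0 < per C x \<and> C #> x [^] per C x = C"
    unfolding per_def by (rule LeastI_ex) (use per_ex in blast)
  then show "0 < per C x" "C #> x [^] per C x = C" by auto
qed

lemma per_min: "0 < r \<Longrightarrow> r < per C x \<Longrightarrow> C #> x [^] r \<noteq> C"
  unfolding per_def using not_less_Least by blast

lemma pow_mult_per: "C #> x [^] (per C x * q) = C"
proof (induction q)
  case 0 then show ?case using C HG by (simp add: rc_one)
next
  case (Suc q)
  have "C #> x [^] (per C x * Suc q) = C #> x [^] (per C x + per C x * q)" by simp
  also have "\<dots> = (C #> x [^] per C x) #> x [^] (per C x * q)"
    using rc_pow_add[OF C HG x] by blast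
  finally show ?case using Suc per_eq by simp
qed

lemma pow_fix_iff: "C #> x [^] (n::nat) = C \<longleftrightarrow> per C x dvd n"
proof
  assume n: "C #> x [^] n = C"
  define q r where "q = n div per C x" and "r = n mod per C x"
  have nqr: "n = per C x * q + r" by (simp add: q_def r_def)
  have "C #> x [^] n = (C #> x [^] (per C x * q)) #> x [^] r"
    using rc_pow_add[OF C HG x] nqr by simp
  then have "C #> x [^] r = C" using n pow_mult_per by simp
  moreover have "r < per C x" using per_pos by (simp add: r_def)
  ultimately have "r = 0" using per_min by blast
  then show "per C x dvd n" by (simp add: r_def dvd_eq_mod_eq_0)
next
  assume "per C x dvd n"
  then show "C #> x [^] n = C" using pow_mult_per by (auto elim: dvdE)
qed

lemma orbit_inj: "inj_on (\<lambda>i. C #> x [^] (i::nat)) {..<per C x}"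
proof (rule inj_onI)
  fix i j assume i: "i \<in> {..<per C x}" and j: "j \<in> {..<per C x}"
    and e: "C #> x [^] i = C #> x [^] j"
  show "i = j"
  proof (rule ccontr)
    assume "i \<noteq> j"
    then consider "i < j" | "j < i" by linarith
    then show False
    proof cases
      case 1
      have "C #> (x [^] j \<otimes> inv (x [^] i)) = C"
        using rc_cancel[OF C HG _ _ e[symmetric]] x by simp
      then have "C #> x [^] (j - i) = C" using 1 x by (simp add: pow_diff_inv)
      then show False using per_min[of "j - i"] 1 j by (simp add: less_imp_diff_less)
    next
      case 2
      have "C #> (x [^] i \<otimes> inv (x [^] j)) = C"
        using rc_cancel[OF C HG _ _ e] x by simp
      then have "C #> x [^] (i - j) = C" using 2 x by (simp add: pow_diff_inv)
      then show False using per_min[of "i - j"] 2 i by (simp add: less_imp_diff_less)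
    qed
  qed
qed

definition orb where "orb = (\<lambda>i. C #> x [^] (i::nat)) ` {..<per C x}"

lemma orb_alt: "orb = (\<lambda>i. C #> x [^] (i::nat)) ` {..<per C x}"
  unfolding orb_def ..

lemma card_orb: "card orb = per C x"
  unfolding orb_def using card_image[OF orbit_inj] by simp

lemma orb_all: "C #> x [^] (n::nat) \<in> orb"
proof -
  have "C #> x [^] n = (C #> x [^] (per C x * (n div per C x))) #> x [^] (n mod per C x)"
    using rc_pow_add[OF C HG x, of "per C x * (n div per C x)" "n mod per C x"] by simp
  also have "\<dots> = C #> x [^] (n mod per C x)" using pow_mult_per by simp
  finally show ?thesis unfolding orb_def using per_pos by auto
qed

lemma orb_iff: "D \<in> orb \<longleftrightarrow> (\<exists>n::nat. D = C #> x [^] n)"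
  using orb_all unfolding orb_def by auto

lemma orb_step: "D \<in> orb \<Longrightarrow> D #> x \<in> orb"
proof -
  assume "D \<in> orb"
  then obtain n :: nat where "D = C #> x [^] n" using orb_iff by blast
  then have "D #> x = C #> x [^] Suc n"
    using rc_pow_add[OF C HG x, of n 1] by simp
  then show ?thesis using orb_iff by blast
qed

lemma orb_back:
  assumes D: "D \<in> rcosets H" and Dx: "D #> x \<in> orb"
  shows "D \<in> orb"
proof -
  obtain n :: nat where n: "D #> x = C #> x [^] n" using Dx orb_iff by blast
  have "D = (D #> x) #> inv x" using D HG x by (simp add: rc_assoc rc_one)
  also have "\<dots> = (C #> x [^] (n + per C x)) #> inv x"
    using n rc_pow_add[OF C HG x, of "per C x" n] per_eq by (simp add: add.commute)
  also have "\<dots> = C #> x [^] (n + per C x - 1)"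
  proof -
    have "(C #> x [^] (n + per C x)) #> inv x = C #> (x [^] (n + per C x) \<otimes> inv (x [^] (1::nat)))"
      using C HG x by (simp add: rc_assoc)
    also have "\<dots> = C #> x [^] (n + per C x - 1)"
      using x per_pos by (subst pow_diff_inv) auto
    finally show ?thesis .
  qed
  finally show ?thesis using orb_iff by blast
qed

lemma orb_sub: "S \<subseteq> rcosets H \<Longrightarrow> C \<in> S \<Longrightarrow> (\<forall>D\<in>S. D #> x \<in> S) \<Longrightarrow> orb \<subseteq> S"
proof
  fix D assume S: "S \<subseteq> rcosets H" "C \<in> S" "\<forall>D\<in>S. D #> x \<in> S" and "D \<in> orb"
  then obtain n :: nat where n: "D = C #> x [^] n" using orb_iff by blast
  have "C #> x [^] m \<in> S" for m :: nat
  proof (induction m)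
    case 0 then show ?case using S C HG by (simp add: rc_one)
  next
    case (Suc m)
    have "C #> x [^] Suc m = (C #> x [^] m) #> x" using rc_pow_add[OF C HG x, of m 1] by simp
    then show ?case using Suc S by simp
  qed
  then show "D \<in> S" using n by simp
qed

lemma orb_nofix:
  assumes "C #> x \<noteq> C" "D \<in> orb"
  shows "D #> x \<noteq> D"
proof
  assume Dx: "D #> x = D"
  obtain n :: nat where n: "D = C #> x [^] n" using assms(2) orb_iff by blast
  have e: "C #> x [^] (n + 1) = C #> x [^] n" using Dx n rc_pow_add[OF C HG x, of n 1] by simp
  have eq1: "x [^] (n + 1) \<otimes> inv (x [^] n) = x [^] ((n + 1) - n)" by (rule pow_diff_inv) auto
  have eq: "x [^] (n + 1) \<otimes> inv (x [^] n) = x" using eq1 by simp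
  have "C #> (x [^] (n + 1) \<otimes> inv (x [^] n)) = C"
    by (rule rc_cancel[OF C HG]) (use e in auto)
  then have "C #> x = C" using eq by metis
  then show False using assms(1) by simp
qed

end

lemma fixpoints_mod:
  assumes fin: "finite (carrier G)" and HG: "H \<subseteq> carrier G"
    and x: "x \<in> carrier G" and p: "Factorial_Ring.prime p" and xp: "x [^] (p ^ c :: nat) = \<one>"
  shows "S \<subseteq> rcosets H \<Longrightarrow> (\<forall>D\<in>S. D #> x \<in> S) \<Longrightarrow>
    card S mod p = card {D \<in> S. D #> x = D} mod p"
proof (induction "card S" arbitrary: S rule: less_induct)
  case less
  have "rcosets H \<subseteq> Pow (carrier G)" using HG by (auto simp: RCOSETS_def r_coset_def)
  then have finS: "finite S"
    using less.prems(1) fin by (meson finite_Pow_iff finite_subset)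
  show ?case
  proof (cases "\<forall>D\<in>S. D #> x = D")
    case True
    then have "{D \<in> S. D #> x = D} = S" by blast
    then show ?thesis by simp
  next
    case False
    then obtain C where C: "C \<in> S" "C #> x \<noteq> C" by blast
    have Cr: "C \<in> rcosets H" using C less.prems by blast
    define O' where "O' = orb C x"
    have OS: "O' \<subseteq> S" unfolding O'_def using orb_sub[OF fin HG Cr x] less.prems C by blast
    define S' where "S' = S - O'"
    have cardS: "card S = card O' + card S'"
      unfolding S'_def using OS finS by (metis card_Diff_subset card_mono le_add_diff_inverse finite_subset)
    have cO: "card O' = per C x" unfolding O'_def using card_orb[OF fin HG Cr x] .
    have "C #> x [^] (p ^ c) = C" using xp rc_one[OF Cr HG] by simp
    then have "per C x dvd p ^ c"
      using pow_fix_iff[OF fin HG Cr x] by blast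
    then obtain m where m: "m \<le> c" "per C x = p ^ m" using p by (auto simp: divides_primepow_nat)
    have "per C x \<noteq> 1"
    proof
      assume "per C x = 1"
      then show False using per_eq[OF fin HG Cr x] C x by simp
    qed
    then have "m \<noteq> 0" using m by auto
    then have pdvd: "p dvd card O'" using cO m by simp
    have S'inv: "\<forall>D\<in>S'. D #> x \<in> S'"
    proof
      fix D assume D: "D \<in> S'"
      then have "D #> x \<in> S" using less.prems S'_def by blast
      moreover have "D #> x \<notin> O'"
        using orb_back[OF fin HG Cr x, of D] D S'_def less.prems O'_def by blast
      ultimately show "D #> x \<in> S'" using S'_def by blast
    qed
    have lt: "card S' < card S"
    proof -
      have "C \<in> O'" unfolding O'_def using orb_all[OF fin HG Cr x, of 0] x Cr HG by (simp add: rc_one)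
      then have "card O' > 0" using OS finS by (metis card_gt_0_iff finite_subset empty_iff)
      then show ?thesis using cardS by simp
    qed
    have IH: "card S' mod p = card {D \<in> S'. D #> x = D} mod p"
      using less.hyps[OF lt] S'inv less.prems S'_def by blast
    have "{D \<in> S. D #> x = D} = {D \<in> S'. D #> x = D}"
      using orb_nofix[OF fin HG Cr x C(2)] S'_def O'_def by blast
    then show ?thesis using IH cardS pdvd by (simp add: mod_add_left_eq[symmetric])
  qed
qed

end

context group begin

lemma mul4_cancel:
  assumes "a \<in> carrier G" "b \<in> carrier G" "c \<in> carrier G" "d \<in> carrier G" "e \<in> carrier G"
  shows "a \<otimes> b \<otimes> inv c \<otimes> (c \<otimes> d \<otimes> inv e) = a \<otimes> (b \<otimes> d) \<otimes> inv e"
  using assms by (simp add: m_assoc)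

lemma rcoset_mem_mult_inv:
  assumes "subgroup H G" "s \<in> carrier G" "z \<in> H #> s"
  shows "z \<otimes> inv s \<in> H"
proof -
  obtain h where h: "h \<in> H" "z = h \<otimes> s" using assms(3) by (auto simp: r_coset_def)
  have hG: "h \<in> carrier G" using subgroup.mem_carrier[OF assms(1) h(1)] .
  then show ?thesis using h assms(2) by (simp add: m_assoc)
qed

definition rep :: "'a set \<Rightarrow> 'a" where "rep C = (SOME t. t \<in> C)"

lemma rep_props:
  assumes "subgroup H G" "C \<in> rcosets H"
  shows "rep C \<in> C" "rep C \<in> carrier G" "C = H #> rep C"
proof -
  obtain a where a: "a \<in> carrier G" "C = H #> a" using assms(2) by (auto simp: RCOSETS_def)
  have "a \<in> C" using a assms(1) by (simp add: rcos_self)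
  then show r: "rep C \<in> C" unfolding rep_def by (rule someI)
  have "C \<subseteq> carrier G" using assms rc_sub subgroup.subset by blast
  then show "rep C \<in> carrier G" using r by blast
  show "C = H #> rep C" using a r assms(1) repr_independence by blast
qed

definition tf :: "'a set \<Rightarrow> 'a \<Rightarrow> 'a set \<Rightarrow> 'a" where
  "tf H g C = rep C \<otimes> g \<otimes> inv (rep (C #> g))"

lemma tf_in:
  assumes "subgroup H G" "C \<in> rcosets H" "g \<in> carrier G"
  shows "tf H g C \<in> H"
proof -
  have HG: "H \<subseteq> carrier G" using assms(1) subgroup.subset by blast
  have Cg: "C #> g \<in> rcosets H" using rc_closed assms HG by blast
  have "rep C \<otimes> g \<in> C #> g"
    using rep_props(1)[OF assms(1,2)] by (auto simp: r_coset_def)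
  then have "rep C \<otimes> g \<in> H #> rep (C #> g)" using rep_props(3)[OF assms(1) Cg] by simp
  then show ?thesis unfolding tf_def
    using rcoset_mem_mult_inv[OF assms(1) rep_props(2)[OF assms(1) Cg]] by blast
qed

definition transfer_map :: "'a set \<Rightarrow> 'a \<Rightarrow> 'a" where
  "transfer_map H g = finprod (G\<lparr>carrier := H\<rparr>) (\<lambda>C. tf H g C) (rcosets H)"

context
  fixes P
  assumes fin: "finite (carrier G)" and subP: "subgroup P G"
    and comm: "\<And>a b. a \<in> P \<Longrightarrow> b \<in> P \<Longrightarrow> a \<otimes> b = b \<otimes> a"
begin

lemma PG_comm: "comm_group (G\<lparr>carrier := P\<rparr>)"
proof -
  have "group (G\<lparr>carrier := P\<rparr>)" using subgroup.subgroup_is_group[OF subP] is_group by blast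
  then show ?thesis using comm by (intro group.group_comm_groupI) auto
qed

lemma PG_sub: "P \<subseteq> carrier G" using subP subgroup.subset by blast

lemma fin_rc: "finite (rcosets P)"
proof -
  have "rcosets P \<subseteq> Pow (carrier G)" using PG_sub by (auto simp: RCOSETS_def r_coset_def)
  then show ?thesis using fin by (meson finite_Pow_iff finite_subset)
qed

lemma rc_shift_bij: "g \<in> carrier G \<Longrightarrow> (\<lambda>C. C #> g) ` (rcosets P) = rcosets P"
proof
  assume g: "g \<in> carrier G"
  show "(\<lambda>C. C #> g) ` (rcosets P) \<subseteq> rcosets P" using rc_closed g PG_sub by blast
  show "rcosets P \<subseteq> (\<lambda>C. C #> g) ` (rcosets P)"
  proof
    fix D assume D: "D \<in> rcosets P"
    have "D = (D #> inv g) #> g" using D g PG_sub by (simp add: rc_assoc rc_one)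
    moreover have "D #> inv g \<in> rcosets P" using D g rc_closed PG_sub by blast
    ultimately show "D \<in> (\<lambda>C. C #> g) ` (rcosets P)" by blast
  qed
qed

lemma rc_shift_inj: "g \<in> carrier G \<Longrightarrow> inj_on (\<lambda>C. C #> g) (rcosets P)"
proof (rule inj_onI)
  fix C D assume g: "g \<in> carrier G" and C: "C \<in> rcosets P" and D: "D \<in> rcosets P"
    and e: "C #> g = D #> g"
  have "C = (C #> g) #> inv g" using C g PG_sub by (simp add: rc_assoc rc_one)
  also have "\<dots> = (D #> g) #> inv g" using e by simp
  also have "\<dots> = D" using D g PG_sub by (simp add: rc_assoc rc_one)
  finally show "C = D" .
qed

lemma transfer_hom:
  assumes g: "g \<in> carrier G" and h: "h \<in> carrier G"
  shows "transfer_map P (g \<otimes> h) = transfer_map P g \<otimes> transfer_map P h"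
proof -
  interpret PG: comm_group "G\<lparr>carrier := P\<rparr>" by (rule PG_comm)
  have tfin: "\<And>k C. k \<in> carrier G \<Longrightarrow> C \<in> rcosets P \<Longrightarrow> tf P k C \<in> P"
    using tf_in subP by blast
  have split: "tf P (g \<otimes> h) C = tf P g C \<otimes> tf P h (C #> g)" if C: "C \<in> rcosets P" for C
  proof -
    have Cg: "C #> g \<in> rcosets P" using C g rc_closed PG_sub by blast
    have "(C #> g) #> h = C #> (g \<otimes> h)" using C g h PG_sub rc_assoc by blast
    moreover have "rep C \<in> carrier G" "rep (C #> g) \<in> carrier G" "rep (C #> (g \<otimes> h)) \<in> carrier G"
      using rep_props(2) subP C Cg rc_closed g h PG_sub by (blast, blast, meson m_closed)
    ultimately show ?thesis unfolding tf_def using g h by (simp add: mul4_cancel m_assoc)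
  qed
  have "transfer_map P (g \<otimes> h) = finprod (G\<lparr>carrier := P\<rparr>) (\<lambda>C. tf P g C \<otimes> tf P h (C #> g)) (rcosets P)"
  proof -
    have "\<forall>C\<in>rcosets P. tf P g C \<otimes> tf P h (C #> g) \<in> P"
    proof
      fix C assume C: "C \<in> rcosets P"
      then have Cg: "C #> g \<in> rcosets P" using rc_closed g PG_sub by blast
      show "tf P g C \<otimes> tf P h (C #> g) \<in> P"
        using subgroup.m_closed[OF subP tfin[OF g C] tfin[OF h Cg]] .
    qed
    then show ?thesis unfolding transfer_map_def using split by (intro PG.finprod_cong') auto
  qed
  also have "\<dots> = transfer_map P g \<otimes> finprod (G\<lparr>carrier := P\<rparr>) (\<lambda>C. tf P h (C #> g)) (rcosets P)"
  proof -
    have "(\<lambda>C. tf P g C) \<in> rcosets P \<rightarrow> P" using tfin g by blast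
    moreover have "(\<lambda>C. tf P h (C #> g)) \<in> rcosets P \<rightarrow> P"
      using tfin h g rc_closed PG_sub by blast
    ultimately show ?thesis unfolding transfer_map_def using PG.finprod_multf by simp
  qed
  also have "finprod (G\<lparr>carrier := P\<rparr>) (\<lambda>C. tf P h (C #> g)) (rcosets P)
      = finprod (G\<lparr>carrier := P\<rparr>) (\<lambda>C. tf P h C) ((\<lambda>C. C #> g) ` (rcosets P))"
  proof -
    have "(\<lambda>C. tf P h C) \<in> (\<lambda>C. C #> g) ` (rcosets P) \<rightarrow> P"
      using tfin h rc_shift_bij[OF g] by auto
    then show ?thesis using PG.finprod_reindex[of "\<lambda>C. tf P h C", OF _ rc_shift_inj[OF g]] by simp
  qed
  also have "\<dots> = transfer_map P h" unfolding transfer_map_def rc_shift_bij[OF g] ..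
  finally show ?thesis .
qed

lemma pow_P: "y \<in> P \<Longrightarrow> y [^] (n::nat) \<in> P"
proof -
  interpret PG: comm_group "G\<lparr>carrier := P\<rparr>" by (rule PG_comm)
  assume y: "y \<in> P"
  then have "y [^]\<^bsub>G\<lparr>carrier := P\<rparr>\<^esub> n \<in> P" using PG.nat_pow_closed[of y n] by simp
  then show ?thesis by (metis nat_pow_consistent)
qed

lemma transfer_closed: "g \<in> carrier G \<Longrightarrow> transfer_map P g \<in> P"
proof -
  interpret PG: comm_group "G\<lparr>carrier := P\<rparr>" by (rule PG_comm)
  assume g: "g \<in> carrier G"
  have "(\<lambda>C. tf P g C) \<in> rcosets P \<rightarrow> P" using tf_in subP g by blast
  then show ?thesis unfolding transfer_map_def using PG.finprod_closed by simp
qed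

context
  fixes x
  assumes fusion: "\<And>t y. t \<in> carrier G \<Longrightarrow> y \<in> P \<Longrightarrow> t \<otimes> y \<otimes> inv t \<in> P \<Longrightarrow> t \<otimes> y \<otimes> inv t = y"
    and xP: "x \<in> P"
begin

lemma xG: "x \<in> carrier G" using xP PG_sub by blast

lemma telescope:
  assumes C: "C \<in> rcosets P"
  shows "finprod (G\<lparr>carrier := P\<rparr>) (\<lambda>i. tf P x (C #> x [^] i)) {..<(j::nat)}
     = rep C \<otimes> x [^] j \<otimes> inv (rep (C #> x [^] j))"
proof -
  interpret PG: comm_group "G\<lparr>carrier := P\<rparr>" by (rule PG_comm)
  show ?thesis
proof (induction j)
  case 0
  have "rep C \<in> carrier G" using rep_props(2)[OF subP C] .
  then show ?case using C PG_sub by (simp add: rc_one)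
next
  case (Suc j)
  have Cj: "C #> x [^] j \<in> rcosets P" using C xG rc_pow_closed PG_sub by blast
  have Cj1: "C #> x [^] Suc j \<in> rcosets P" using C xG rc_pow_closed PG_sub by blast
  have inP: "(\<lambda>i. tf P x (C #> x [^] i)) \<in> {..<j} \<rightarrow> P"
    using tf_in subP xG C rc_pow_closed PG_sub by blast
  have tj: "tf P x (C #> x [^] j) \<in> P" using tf_in subP xG Cj by blast
  have "finprod (G\<lparr>carrier := P\<rparr>) (\<lambda>i. tf P x (C #> x [^] i)) {..<Suc j}
      = tf P x (C #> x [^] j) \<otimes> finprod (G\<lparr>carrier := P\<rparr>) (\<lambda>i. tf P x (C #> x [^] i)) {..<j}"
    using PG.finprod_insert[of "{..<j}" j "\<lambda>i. tf P x (C #> x [^] i)"] inP tj by (simp add: lessThan_Suc)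
  also have "\<dots> = finprod (G\<lparr>carrier := P\<rparr>) (\<lambda>i. tf P x (C #> x [^] i)) {..<j} \<otimes> tf P x (C #> x [^] j)"
  proof -
    have "finprod (G\<lparr>carrier := P\<rparr>) (\<lambda>i. tf P x (C #> x [^] i)) {..<j} \<in> P"
      using PG.finprod_closed[of "\<lambda>i. tf P x (C #> x [^] i)" "{..<j}"] inP by simp
    then show ?thesis using comm tj by simp
  qed
  also have "\<dots> = rep C \<otimes> x [^] j \<otimes> inv (rep (C #> x [^] j)) \<otimes>
      (rep (C #> x [^] j) \<otimes> x \<otimes> inv (rep (C #> x [^] j #> x)))"
    using Suc.IH by (simp add: tf_def)
  also have "\<dots> = rep C \<otimes> (x [^] j \<otimes> x) \<otimes> inv (rep (C #> x [^] j #> x))"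
    using rep_props(2)[OF subP] C Cj Cj1 xG rc_closed PG_sub by (intro mul4_cancel) auto
  also have "C #> x [^] j #> x = C #> x [^] Suc j"
    using rc_pow_add[OF C PG_sub xG, of j 1] xG by simp
  finally show ?case using xG by simp
qed
qed

lemma transfer_orbits:
  "S \<subseteq> rcosets P \<Longrightarrow> (\<forall>D\<in>S. D #> x \<in> S) \<Longrightarrow>
    finprod (G\<lparr>carrier := P\<rparr>) (\<lambda>C. tf P x C) S = x [^] card S"
proof (induction "card S" arbitrary: S rule: less_induct)
  case less
  interpret PG: comm_group "G\<lparr>carrier := P\<rparr>" by (rule PG_comm)
  have finS: "finite S" using less.prems(1) fin_rc finite_subset by blast
  show ?case
  proof (cases "S = {}")
    case True then show ?thesis by simp
  next
    case False
    then obtain C where C: "C \<in> S" by blast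
    have Cr: "C \<in> rcosets P" using C less.prems by blast
    define O' where "O' = orb C x"
    have OS: "O' \<subseteq> S" unfolding O'_def using orb_sub[OF fin PG_sub Cr xG] less.prems C by blast
    define S' where "S' = S - O'"
    have SU: "S = O' \<union> S'" and disj: "O' \<inter> S' = {}" using OS S'_def by auto
    have finO: "finite O'" and finS': "finite S'" using OS finS S'_def finite_subset by auto
    have cardS: "card S = card O' + card S'"
      using SU disj finO finS' card_Un_disjoint by metis
    have cO: "card O' = per C x" unfolding O'_def using card_orb[OF fin PG_sub Cr xG] .
    have S'inv: "\<forall>D\<in>S'. D #> x \<in> S'"
    proof
      fix D assume D: "D \<in> S'"
      then have "D #> x \<in> S" using less.prems S'_def by blast
      moreover have "D #> x \<notin> O'"
        using orb_back[OF fin PG_sub Cr xG, of D] D S'_def less.prems O'_def by blast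
      ultimately show "D #> x \<in> S'" using S'_def by blast
    qed
    have lt: "card S' < card S" using cardS cO per_pos[OF fin PG_sub Cr xG] by simp
    have IH: "finprod (G\<lparr>carrier := P\<rparr>) (\<lambda>C. tf P x C) S' = x [^] card S'"
      using less.hyps[OF lt] S'inv less.prems S'_def by blast
    have inP: "(\<lambda>C. tf P x C) \<in> S \<rightarrow> P" using tf_in subP xG less.prems by blast
    have "finprod (G\<lparr>carrier := P\<rparr>) (\<lambda>C. tf P x C) S
        = finprod (G\<lparr>carrier := P\<rparr>) (\<lambda>C. tf P x C) O' \<otimes> finprod (G\<lparr>carrier := P\<rparr>) (\<lambda>C. tf P x C) S'"
      using PG.finprod_Un_disjoint[OF finO finS' disj] inP SU by auto
    also have "finprod (G\<lparr>carrier := P\<rparr>) (\<lambda>C. tf P x C) O' = x [^] per C x"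
    proof -
      have "finprod (G\<lparr>carrier := P\<rparr>) (\<lambda>C. tf P x C) O'
          = finprod (G\<lparr>carrier := P\<rparr>) (\<lambda>i. tf P x (C #> x [^] i)) {..<per C x}"
      proof -
        have "(\<lambda>C. tf P x C) \<in> (\<lambda>i. C #> x [^] i) ` {..<per C x} \<rightarrow> P"
          using inP OS unfolding O'_def orb_alt[OF fin PG_sub Cr xG] by blast
        then show ?thesis unfolding O'_def orb_alt[OF fin PG_sub Cr xG]
          using PG.finprod_reindex[OF _ orbit_inj[OF fin PG_sub Cr xG]] by simp
      qed
      also have "\<dots> = rep C \<otimes> x [^] per C x \<otimes> inv (rep (C #> x [^] per C x))"
        using telescope[OF Cr] .
      also have "\<dots> = rep C \<otimes> x [^] per C x \<otimes> inv (rep C)"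
        using per_eq[OF fin PG_sub Cr xG] by simp
      also have "\<dots> = x [^] per C x"
      proof (rule fusion)
        show "rep C \<in> carrier G" using rep_props(2)[OF subP Cr] .
        show "x [^] per C x \<in> P" using xP by (rule pow_P)
        have inP': "(\<lambda>i. tf P x (C #> x [^] i)) \<in> {..<per C x} \<rightarrow> P"
          using tf_in subP xG Cr rc_pow_closed PG_sub by blast
        have "finprod (G\<lparr>carrier := P\<rparr>) (\<lambda>i. tf P x (C #> x [^] i)) {..<per C x} \<in> P"
          using PG.finprod_closed[of "\<lambda>i. tf P x (C #> x [^] i)" "{..<per C x}"] inP' by simp
        then have "rep C \<otimes> x [^] per C x \<otimes> inv (rep (C #> x [^] per C x)) \<in> P"
          using telescope[OF Cr, of "per C x"] by simp
        then show "rep C \<otimes> x [^] per C x \<otimes> inv (rep C) \<in> P"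
          using per_eq[OF fin PG_sub Cr xG] by simp
      qed
      finally show ?thesis .
    qed
    finally show ?thesis using IH cardS cO xG by (simp add: nat_pow_mult)
  qed
qed

lemma transfer_eval: "transfer_map P x = x [^] card (rcosets P)"
proof -
  have "\<forall>D\<in>rcosets P. D #> x \<in> rcosets P" using rc_closed xG PG_sub by blast
  then show ?thesis unfolding transfer_map_def using transfer_orbits by blast
qed

end
end
end

lemma (in group_hom) fiber_card:
  assumes fin: "finite (carrier G)" and Y: "Y \<subseteq> h ` carrier G"
  shows "card {g \<in> carrier G. h g \<in> Y} = card (kernel G H h) * card Y"
proof -
  define K where "K = kernel G H h"
  have Ksub: "subgroup K G" unfolding K_def by (rule subgroup_kernel)
  have KG: "K \<subseteq> carrier G" using Ksub subgroup.subset by blast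
  define r where "r y = (SOME g. g \<in> carrier G \<and> h g = y)" for y
  have r: "r y \<in> carrier G \<and> h (r y) = y" if yY: "y \<in> Y" for y
  proof -
    obtain g where "g \<in> carrier G" "h g = y" using yY Y by blast
    then show ?thesis unfolding r_def by (metis (mono_tags, lifting) someI)
  qed
  have fib: "{g \<in> carrier G. h g = y} = K #> r y" if y: "y \<in> Y" for y
  proof
    show "{g \<in> carrier G. h g = y} \<subseteq> K #> r y"
    proof
      fix g assume g: "g \<in> {g \<in> carrier G. h g = y}"
      have ry: "r y \<in> carrier G" "h (r y) = y" using r y by auto
      have hy: "y \<in> carrier H" using ry hom_closed by metis
      have "h (g \<otimes>\<^bsub>G\<^esub> inv\<^bsub>G\<^esub> r y) = \<one>\<^bsub>H\<^esub>"
        using g ry hy by (simp add: hom_inv)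
      then have "g \<otimes>\<^bsub>G\<^esub> inv\<^bsub>G\<^esub> r y \<in> K" using g ry by (simp add: K_def kernel_def)
      moreover have "g = (g \<otimes>\<^bsub>G\<^esub> inv\<^bsub>G\<^esub> r y) \<otimes>\<^bsub>G\<^esub> r y"
        using g ry by (simp add: G.m_assoc)
      ultimately show "g \<in> K #> r y" unfolding r_coset_def by blast
    qed
    show "K #> r y \<subseteq> {g \<in> carrier G. h g = y}"
    proof
      fix g assume "g \<in> K #> r y"
      then obtain k where k: "k \<in> K" "g = k \<otimes>\<^bsub>G\<^esub> r y" unfolding r_coset_def by blast
      have ry: "r y \<in> carrier G" "h (r y) = y" using r y by auto
      have kG: "k \<in> carrier G" "h k = \<one>\<^bsub>H\<^esub>" using k(1) by (auto simp: K_def kernel_def)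
      have "y \<in> carrier H" using ry hom_closed by metis
      then show "g \<in> {g \<in> carrier G. h g = y}" using k kG ry by auto
    qed
  qed
  have eq: "{g \<in> carrier G. h g \<in> Y} = (\<Union>y\<in>Y. {g \<in> carrier G. h g = y})" by blast
  have finY: "finite Y" using Y fin finite_surj by blast
  have "card (\<Union>y\<in>Y. {g \<in> carrier G. h g = y}) = (\<Sum>y\<in>Y. card {g \<in> carrier G. h g = y})"
    by (rule card_UN_disjoint) (use finY fin in auto)
  also have "\<dots> = (\<Sum>y\<in>Y. card K)"
  proof (rule sum.cong)
    fix y assume y: "y \<in> Y"
    have "K #> r y \<in> rcosets K" using r y by (auto simp: RCOSETS_def)
    then have "card K = card (K #> r y)" using G.card_rcosets_equal KG by blast
    then show "card {g \<in> carrier G. h g = y} = card K" using fib y by simp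
  qed simp
  finally show ?thesis using eq K_def by simp
qed

context group begin

lemma conj_iter:
  assumes t: "t \<in> carrier G" and y: "y \<in> carrier G" and e: "t \<otimes> y \<otimes> inv t = y [^] (e::nat)"
  shows "t [^] (j::nat) \<otimes> y \<otimes> inv (t [^] j) = y [^] (e ^ j)"
proof (induction j)
  case 0 then show ?case using y by simp
next
  case (Suc j)
  have tj: "t [^] j \<in> carrier G" using t by simp
  have ts: "t [^] Suc j = t \<otimes> t [^] j" using t nat_pow_Suc2 by blast
  have "t [^] Suc j \<otimes> y \<otimes> inv (t [^] Suc j) = t \<otimes> t [^] j \<otimes> y \<otimes> inv (t \<otimes> t [^] j)"
    by (simp only: ts)
  also have "\<dots> = t \<otimes> (t [^] j \<otimes> y \<otimes> inv (t [^] j)) \<otimes> inv t"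
    using t y tj by (simp add: inv_mult_group m_assoc)
  also have "\<dots> = t \<otimes> y [^] (e ^ j) \<otimes> inv t" using Suc by simp
  also have "\<dots> = (t \<otimes> y \<otimes> inv t) [^] (e ^ j)" using conj_pow t y by simp
  also have "\<dots> = y [^] (e ^ Suc j)" using e y by (simp add: nat_pow_pow)
  finally show ?case .
qed

lemma coset_fix_conj:
  assumes "subgroup P G" "s \<in> carrier G" "z \<in> carrier G" "P #> s #> z = P #> s"
  shows "s \<otimes> z \<otimes> inv s \<in> P"
proof -
  have "P #> s #> z = P #> (s \<otimes> z)" using coset_mult_assoc[OF subgroup.subset[OF assms(1)] assms(2,3)] .
  then have "s \<otimes> z \<in> P #> s" using assms rcos_self[OF _ assms(1)] by (metis m_closed)
  then show ?thesis using rcoset_mem_mult_inv[OF assms(1,2)] by simp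
qed

lemma rc_fix_pow:
  assumes "C \<in> rcosets H" "H \<subseteq> carrier G" "y \<in> carrier G" "C #> y = C"
  shows "C #> y [^] (n::nat) = C"
proof (induction n)
  case 0 then show ?case using assms by (simp add: rc_one)
next
  case (Suc n)
  have "C #> y [^] Suc n = (C #> y [^] n) #> y" using assms rc_pow_add[of C H y n 1] by simp
  then show ?case using Suc assms by simp
qed

lemma fusion_cyclic:
  assumes fin: "finite (carrier G)" and p: "Factorial_Ring.prime p"
    and subP: "subgroup P G" and cardP: "card P = p ^ a"
    and gam: "\<gamma> \<in> P" and cyc: "P = range (\<lambda>i::nat. \<gamma> [^] i)"
    and idx: "coprime (card (rcosets P)) p"
    and pmin: "\<And>q. Factorial_Ring.prime q \<Longrightarrow> q dvd order G \<Longrightarrow> p \<le> q"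
    and t: "t \<in> carrier G" and yP: "y \<in> P" and vP: "t \<otimes> y \<otimes> inv t \<in> P"
  shows "t \<otimes> y \<otimes> inv t = y"
proof -
  have PG: "P \<subseteq> carrier G" using subP subgroup.subset by blast
  have gG: "\<gamma> \<in> carrier G" using gam PG by blast
  have y: "y \<in> carrier G" using yP PG by blast
  have ordg: "ord \<gamma> = p ^ a" using cyc_card[OF fin gG] cyc cardP by simp
  have comm: "a' \<otimes> b = b \<otimes> a'" if ab: "a' \<in> P" "b \<in> P" for a' b
  proof -
    obtain i j :: nat where "a' = \<gamma> [^] i" "b = \<gamma> [^] j" using ab cyc by blast
    then show ?thesis using gG by (simp add: nat_pow_mult add.commute)
  qed
  have ypow: "y [^] (p ^ a) = \<one>"
  proof -
    obtain i :: nat where "y = \<gamma> [^] i" using yP cyc by blast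
    then have "y [^] (p ^ a) = \<gamma> [^] (i * p ^ a)" using gG by (simp add: nat_pow_pow)
    also have "\<dots> = (\<gamma> [^] (p ^ a)) [^] i" using gG by (simp add: nat_pow_pow mult.commute)
    also have "\<gamma> [^] (p ^ a) = \<one>" using ordg gG pow_ord_eq_1 by metis
    finally show ?thesis by simp
  qed
  obtain e :: nat where e: "t \<otimes> y \<otimes> inv t = y [^] e"
    using cyc_same_ord_power[OF fin gG, of y "t \<otimes> y \<otimes> inv t"] yP vP cyc ord_conj[OF t y] by auto
  define od where "od = ord t"
  have o0: "od > 0" using ord_ge_1[OF fin t] od_def by simp
  define c where "c = multiplicity p od"
  define k where "k = od div p ^ c"
  have okc: "od = p ^ c * k" unfolding k_def c_def by (simp add: multiplicity_dvd)
  have k0: "k > 0" using okc o0 by (metis gr0I mult_0_right)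
  have pk: "\<not> p dvd k" unfolding k_def c_def
    using multiplicity_decompose[of od p] o0 p prime_gt_1_nat by force
  define w where "w = t [^] k"
  have wG: "w \<in> carrier G" using t w_def by simp
  have wp: "w [^] (p ^ c) = \<one>"
  proof -
    have "w [^] (p ^ c) = t [^] od" unfolding w_def using t okc by (simp add: nat_pow_pow mult.commute)
    then show ?thesis using t od_def by simp
  qed
  have wy: "w \<otimes> y \<otimes> inv w = y [^] (e ^ k)" unfolding w_def using conj_iter[OF t y e] .
  define F where "F = {D \<in> rcosets P. D #> y = D}"
  have F1: "card (rcosets P) mod p = card F mod p"
    unfolding F_def using fixpoints_mod[OF fin PG y p ypow, of "rcosets P"] rc_closed y PG by blast
  have Finv: "\<forall>D\<in>F. D #> w \<in> F"
  proof
    fix D assume D: "D \<in> F"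
    have Dr: "D \<in> rcosets P" and Dy: "D #> y = D" using D F_def by auto
    have "w \<otimes> y = y [^] (e ^ k) \<otimes> w"
    proof -
      have "w \<otimes> y = (w \<otimes> y \<otimes> inv w) \<otimes> w" using wG y by (simp add: m_assoc)
      then show ?thesis using wy by simp
    qed
    then have "(D #> w) #> y = (D #> y [^] (e ^ k)) #> w"
      using Dr PG wG y by (simp add: rc_assoc)
    also have "\<dots> = D #> w" using rc_fix_pow[OF Dr PG y Dy] by simp
    finally show "D #> w \<in> F" using F_def Dr rc_closed wG PG by blast
  qed
  have F2: "card F mod p = card {D \<in> F. D #> w = D} mod p"
    using fixpoints_mod[OF fin PG wG p wp, of F] Finv F_def by blast
  have "card {D \<in> F. D #> w = D} \<noteq> 0"
  proof
    assume "card {D \<in> F. D #> w = D} = 0"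
    then have "card (rcosets P) mod p = 0" using F1 F2 by simp
    then have "p dvd card (rcosets P)" by (simp add: dvd_eq_mod_eq_0)
    then show False using idx p by (metis coprime_commute coprime_absorb_left not_prime_unit)
  qed
  then obtain D where D: "D \<in> rcosets P" "D #> y = D" "D #> w = D"
    using F_def by (metis (mono_tags, lifting) Collect_empty_eq card.empty mem_Collect_eq)
  obtain s where s: "s \<in> carrier G" "D = P #> s" using D(1) by (auto simp: RCOSETS_def)
  have a1: "s \<otimes> y \<otimes> inv s \<in> P" using coset_fix_conj[OF subP s(1) y] D s by simp
  have a2: "s \<otimes> w \<otimes> inv s \<in> P" using coset_fix_conj[OF subP s(1) wG] D s by simp
  have "(s \<otimes> y \<otimes> inv s) \<otimes> (s \<otimes> w \<otimes> inv s) = (s \<otimes> w \<otimes> inv s) \<otimes> (s \<otimes> y \<otimes> inv s)"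
    using comm a1 a2 by blast
  then have "s \<otimes> (y \<otimes> w) \<otimes> inv s = s \<otimes> (w \<otimes> y) \<otimes> inv s"
    using s y wG by (simp add: m_assoc)
  then have yw: "y \<otimes> w = w \<otimes> y" using s y wG by (metis m_closed inv_closed r_cancel l_cancel)
  have yek: "y [^] (e ^ k) = y"
  proof -
    have "w \<otimes> y \<otimes> inv w = y \<otimes> w \<otimes> inv w" using yw by simp
    also have "\<dots> = y" using wG y by (simp add: m_assoc)
    finally have "w \<otimes> y \<otimes> inv w = y" .
    then show ?thesis using wy by simp
  qed
  show ?thesis
  proof (cases "y = \<one>")
    case True then show ?thesis using t by simp
  next
    case False
    have "ord y dvd p ^ a" using ypow y pow_eq_id by blast
    then obtain b where b: "b \<le> a" "ord y = p ^ b" using p by (auto simp: divides_primepow_nat)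
    have b0: "b \<noteq> 0" using b False ord_eq_1[OF y] by auto
    have e0: "e \<noteq> 0"
    proof
      assume "e = 0"
      then show False using yek False k0 by (simp add: zero_power)
    qed
    have ek1: "e ^ k \<ge> 1" using e0 by simp
    have "y [^] (e ^ k) = y [^] (1::nat)" using yek y by simp
    then have "y [^] (e ^ k) \<otimes> inv (y [^] (1::nat)) = \<one>" using y by simp
    then have "y [^] (e ^ k - 1) = \<one>" using pow_diff_inv[OF y ek1] by simp
    then have "p ^ b dvd e ^ k - 1" using b y pow_eq_id by simp
    then have c1: "[e ^ k = 1] (mod p ^ b)" using ek1 by (simp add: cong_altdef_nat)
    have cop: "coprime e p"
    proof (rule ccontr)
      assume "\<not> coprime e p"
      then have "p dvd e" using p by (metis prime_imp_coprime coprime_commute)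
      then have "p dvd e ^ k" using k0 by (metis dvd_power dvd_trans)
      moreover have "p dvd e ^ k - 1" using \<open>p ^ b dvd e ^ k - 1\<close> b0
        by (meson dvd_power dvd_trans gr0I)
      ultimately have "p dvd 1" using ek1 by (metis dvd_diff_nat diff_diff_cancel)
      then show False using p by simp
    qed
    have kp: "\<forall>r. Factorial_Ring.prime r \<longrightarrow> r dvd k \<longrightarrow> p < r"
    proof (intro allI impI)
      fix r assume r: "Factorial_Ring.prime r" "r dvd k"
      have "r dvd order G" using r okc od_def ord_dvd_group_order[OF t] by (metis dvd_mult_right dvd_trans)
      then have "p \<le> r" using pmin r by blast
      moreover have "r \<noteq> p" using r pk by blast
      ultimately show "p < r" by simp
    qed
    have "[e = 1] (mod p ^ b)" using nt_key[OF p k0 kp c1 cop] .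
    then have "p ^ b dvd e - 1" using e0 by (simp add: cong_altdef_nat)
    then have "y [^] (e - 1) = \<one>" using b y pow_eq_id by simp
    then have "y [^] (e - 1) \<otimes> y = y" using y by simp
    moreover have "y [^] (e - 1) \<otimes> y = y [^] e" using y e0 nat_pow_Suc[of y "e - 1"] by simp
    ultimately have "y [^] e = y" by simp
    then show ?thesis using e by simp
  qed
qed

end

definition tdiv :: "nat \<Rightarrow> nat \<Rightarrow> bool" where
  "tdiv n d \<longleftrightarrow> d dvd n \<and> (\<forall>q r. Factorial_Ring.prime q \<longrightarrow> Factorial_Ring.prime r \<longrightarrow>
      q dvd d \<longrightarrow> r dvd n \<longrightarrow> q < r \<longrightarrow> multiplicity r d = multiplicity r n)"

lemma tdiv_coprime:
  fixes n m p a d :: nat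
  assumes t: "tdiv n d" and n: "n = p ^ a * m" and p: "Factorial_Ring.prime p"
    and pm: "\<not> p dvd m" and pd: "\<not> p dvd d" and m0: "m > 0"
  shows "tdiv m d"
proof -
  have dn: "d dvd p ^ a * m" using t n by (simp add: tdiv_def)
  have "coprime d (p ^ a)" using pd p
    by (metis coprime_commute coprime_power_right_iff prime_imp_coprime)
  then have dm: "d dvd m" using dn coprime_dvd_mult_right_iff by blast
  have "multiplicity r d = multiplicity r m"
    if q: "Factorial_Ring.prime q" and r: "Factorial_Ring.prime r" and qd: "q dvd d"
      and rm: "r dvd m" and qr: "q < r" for q r
  proof -
    have "r dvd n" using rm n by simp
    then have "multiplicity r d = multiplicity r n" using t q r qd qr by (simp add: tdiv_def)
    moreover have "r \<noteq> p" using rm pm by blast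
    then have "multiplicity r n = multiplicity r m"
      using n p r m0 prime_gt_0_nat
      by (simp add: prime_elem_multiplicity_mult_distrib multiplicity_distinct_prime_power)
    ultimately show ?thesis by simp
  qed
  then show ?thesis using dm by (simp add: tdiv_def)
qed

lemma tdiv_split:
  fixes n m p a d :: nat
  assumes t: "tdiv n d" and n: "n = p ^ a * m" and p: "Factorial_Ring.prime p"
    and pm: "\<not> p dvd m" and pd: "p dvd d" and m0: "m > 0"
    and pmin: "\<And>q. Factorial_Ring.prime q \<Longrightarrow> q dvd n \<Longrightarrow> p \<le> q"
  shows "d = m * p ^ multiplicity p d \<and> multiplicity p d \<le> a"
proof -
  have dn: "d dvd n" using t by (simp add: tdiv_def)
  have n0: "n \<noteq> 0" using n m0 p prime_gt_0_nat by simp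
  then have d0: "d \<noteq> 0" using dn by auto
  have pe: "prime_elem p" using p by simp
  have mpn: "multiplicity p n = a" using n m0 pm p
    by (simp add: prime_elem_multiplicity_mult_distrib multiplicity_prime_power not_dvd_imp_multiplicity_0)
  have "multiplicity p d \<le> multiplicity p n" using dn d0 n0 by (simp add: dvd_imp_multiplicity_le)
  then have le: "multiplicity p d \<le> a" using mpn by simp
  have "multiplicity r d = multiplicity r (m * p ^ multiplicity p d)"
    if r: "Factorial_Ring.prime r" for r
  proof (cases "r = p")
    case True
    then show ?thesis using p m0 pm
      by (simp add: prime_elem_multiplicity_mult_distrib multiplicity_prime_power not_dvd_imp_multiplicity_0)
  next
    case False
    have rhs: "multiplicity r (m * p ^ multiplicity p d) = multiplicity r m"
      using False p r m0 prime_gt_0_nat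
      by (simp add: prime_elem_multiplicity_mult_distrib multiplicity_distinct_prime_power)
    have mrn: "multiplicity r n = multiplicity r m"
      using False p r m0 n prime_gt_0_nat
      by (simp add: prime_elem_multiplicity_mult_distrib multiplicity_distinct_prime_power)
    show ?thesis
    proof (cases "r dvd n")
      case True
      have "p \<le> r" using pmin r True by blast
      then have "p < r" using False by simp
      then have "multiplicity r d = multiplicity r n" using t p r pd True by (simp add: tdiv_def)
      then show ?thesis using rhs mrn by simp
    next
      case False
      then have "\<not> r dvd d" using dn dvd_trans by blast
      then have "multiplicity r d = 0" by (simp add: not_dvd_imp_multiplicity_0)
      moreover have "\<not> r dvd m" using False n by auto
      then have "multiplicity r m = 0" by (simp add: not_dvd_imp_multiplicity_0)
      ultimately show ?thesis using rhs by simp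
    qed
  qed
  then have "normalize d = normalize (m * p ^ multiplicity p d)"
  proof -
    assume A: "\<And>r. Factorial_Ring.prime r \<Longrightarrow> multiplicity r d = multiplicity r (m * p ^ multiplicity p d)"
    have nz: "m * p ^ multiplicity p d \<noteq> 0" using m0 p by simp
    show ?thesis using multiplicity_eq_imp_eq[OF d0 nz A] .
  qed
  then show ?thesis using le by simp
qed

context group begin

lemma cyc_count:
  assumes fin: "finite (carrier G)" and g: "\<gamma> \<in> carrier G" and p: "Factorial_Ring.prime p"
    and og: "ord \<gamma> = p ^ a" and ia: "i \<le> a"
  shows "card {z \<in> range (\<lambda>k::nat. \<gamma> [^] k). z [^] (p ^ i) = \<one>} = p ^ i"
proof -
  define s where "s = p ^ (a - i)"
  have sp: "s * p ^ i = p ^ a" using ia by (simp add: s_def power_add[symmetric])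
  have s0: "s > 0" using p prime_gt_0_nat s_def by simp
  have eq: "{z \<in> range (\<lambda>k::nat. \<gamma> [^] k). z [^] (p ^ i) = \<one>} = (\<lambda>j. \<gamma> [^] (s * j)) ` {..<p ^ i}"
  proof
    show "{z \<in> range (\<lambda>k::nat. \<gamma> [^] k). z [^] (p ^ i) = \<one>} \<subseteq> (\<lambda>j. \<gamma> [^] (s * j)) ` {..<p ^ i}"
    proof
      fix z assume "z \<in> {z \<in> range (\<lambda>k::nat. \<gamma> [^] k). z [^] (p ^ i) = \<one>}"
      then obtain k :: nat where k: "z = \<gamma> [^] k" "(\<gamma> [^] k) [^] (p ^ i) = \<one>" by blast
      then have "\<gamma> [^] (k * p ^ i) = \<one>" using g by (simp add: nat_pow_pow)
      then have "p ^ a dvd k * p ^ i" using og g pow_eq_id by metis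
      then have "s * p ^ i dvd k * p ^ i" using sp by simp
      moreover have "p ^ i \<noteq> 0" using p by simp
      ultimately have "s dvd k" using dvd_times_right_cancel_iff by blast
      then obtain c where c: "k = s * c" by (auto elim: dvdE)
      define q r where "q = c div p ^ i" and "r = c mod p ^ i"
      have "c = p ^ i * q + r" by (simp add: q_def r_def)
      then have "s * c = (s * p ^ i) * q + s * r" by (simp add: algebra_simps)
      then have cqr: "s * c = p ^ a * q + s * r" using sp by simp
      have "z = \<gamma> [^] (p ^ a * q) \<otimes> \<gamma> [^] (s * r)" using k c cqr g by (simp add: nat_pow_mult)
      also have "\<gamma> [^] (p ^ a * q) = \<one>" using og g by (simp add: pow_eq_id)
      finally have "z = \<gamma> [^] (s * r)" using g by simp
      moreover have "r < p ^ i" using p prime_gt_0_nat by (simp add: r_def)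
      ultimately show "z \<in> (\<lambda>j. \<gamma> [^] (s * j)) ` {..<p ^ i}" by blast
    qed
    show "(\<lambda>j. \<gamma> [^] (s * j)) ` {..<p ^ i} \<subseteq> {z \<in> range (\<lambda>k::nat. \<gamma> [^] k). z [^] (p ^ i) = \<one>}"
    proof
      fix z assume "z \<in> (\<lambda>j. \<gamma> [^] (s * j)) ` {..<p ^ i}"
      then obtain j where j: "z = \<gamma> [^] (s * j)" by blast
      have "z [^] (p ^ i) = \<gamma> [^] (p ^ a * j)" using j g sp by (simp add: nat_pow_pow algebra_simps flip: sp)
      also have "\<dots> = \<one>" using og g by (simp add: pow_eq_id)
      finally show "z \<in> {z \<in> range (\<lambda>k::nat. \<gamma> [^] k). z [^] (p ^ i) = \<one>}" using j by blast
    qed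
  qed
  have inj: "inj_on (\<lambda>j. \<gamma> [^] (s * j)) {..<p ^ i}"
  proof (rule inj_onI)
    fix j1 j2 assume j1: "j1 \<in> {..<p ^ i}" and j2: "j2 \<in> {..<p ^ i}"
      and e: "\<gamma> [^] (s * j1) = \<gamma> [^] (s * j2)"
    have "s * j1 < s * p ^ i" "s * j2 < s * p ^ i" using j1 j2 s0 by auto
    then have "s * j1 \<in> {0 .. ord \<gamma> - 1}" "s * j2 \<in> {0 .. ord \<gamma> - 1}" using sp og by auto
    then have "s * j1 = s * j2" using ord_inj[OF g] e unfolding inj_on_def by blast
    then show "j1 = j2" using s0 by simp
  qed
  show ?thesis using eq card_image[OF inj] by simp
qed

end

definition cycset :: "('a, 'b) monoid_scheme \<Rightarrow> 'a set \<Rightarrow> bool" where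
  "cycset G P \<longleftrightarrow> (\<exists>\<gamma>\<in>P. P = range (\<lambda>i::nat. \<gamma> [^]\<^bsub>G\<^esub> i))"

definition zgroup :: "('a, 'b) monoid_scheme \<Rightarrow> bool" where
  "zgroup G \<longleftrightarrow> group G \<and> finite (carrier G) \<and>
     (\<forall>q Q. Factorial_Ring.prime q \<longrightarrow> subgroup Q G \<longrightarrow> card Q = q ^ multiplicity q (order G) \<longrightarrow> cycset G Q)"

definition Dset :: "('a, 'b) monoid_scheme \<Rightarrow> nat \<Rightarrow> 'a set" where
  "Dset G d = {x \<in> carrier G. x [^]\<^bsub>G\<^esub> d = \<one>\<^bsub>G\<^esub>}"

context group begin

lemma coprime_pow_one:
  assumes z: "z \<in> carrier G" and zk: "z [^] (k::nat) = \<one>" and zl: "z [^] (l::nat) = \<one>"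
    and c: "coprime k l" and k0: "k > 0"
  shows "z = \<one>"
proof -
  obtain s u where su: "k * s = l * u + gcd k l" using bezout_nat[of k l] k0 by auto
  then have su': "k * s = l * u + 1" using c by (metis coprime_iff_gcd_eq_1)
  have "z [^] (k * s) = \<one>" using z zk by (simp add: nat_pow_pow[symmetric])
  moreover have "z [^] (l * u + 1) = z" using z zl by (simp add: nat_pow_mult[symmetric] nat_pow_pow[symmetric])
  ultimately show ?thesis using su' by simp
qed

lemma cyc_pow_ord:
  assumes g: "g \<in> carrier G" and z: "z \<in> range (\<lambda>i::nat. g [^] i)"
  shows "z [^] ord g = \<one>"
proof -
  obtain i :: nat where i: "z = g [^] i" using z by blast
  have "z [^] ord g = g [^] (i * ord g)" using i g by (simp add: nat_pow_pow)
  also have "\<dots> = \<one>" using g by (simp add: pow_eq_id)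
  finally show ?thesis .
qed

lemma hom_pow_aux:
  assumes V: "\<And>x y. x \<in> carrier G \<Longrightarrow> y \<in> carrier G \<Longrightarrow> f (x \<otimes> y) = f x \<otimes> f y"
    and Vc: "\<And>x. x \<in> carrier G \<Longrightarrow> f x \<in> carrier G"
  shows "f \<one> = \<one>" and "x \<in> carrier G \<Longrightarrow> f (x [^] (n::nat)) = f x [^] n"
proof -
  have "f \<one> \<otimes> f \<one> = f \<one> \<otimes> \<one>" using V[of \<one> \<one>] Vc[of \<one>] by simp
  then show f1: "f \<one> = \<one>" using Vc[of \<one>] by (metis l_cancel one_closed)
  assume x: "x \<in> carrier G"
  show "f (x [^] n) = f x [^] n"
  proof (induction n)
    case 0 then show ?case using f1 by simp
  next
    case (Suc n)
    have "f (x [^] Suc n) = f (x [^] n \<otimes> x)" by simp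
    also have "\<dots> = f (x [^] n) \<otimes> f x" using V x by simp
    finally show ?case using Suc by simp
  qed
qed

lemma Dset_subgroupI:
  assumes d0: "d > 0" and cl: "\<And>x y. x \<in> Dset G d \<Longrightarrow> y \<in> Dset G d \<Longrightarrow> x \<otimes> y \<in> Dset G d"
  shows "subgroup (Dset G d) G"
proof -
  have one: "\<one> \<in> Dset G d" by (simp add: Dset_def)
  have pw: "x [^] (j::nat) \<in> Dset G d" if x: "x \<in> Dset G d" for x j
  proof (induction j)
    case 0 then show ?case using one by simp
  next
    case (Suc j)
    have "x [^] Suc j = x [^] j \<otimes> x" using x by (simp add: Dset_def)
    then show ?case using cl[OF Suc x] by simp
  qed
  have inv: "inv x \<in> Dset G d" if x: "x \<in> Dset G d" for x
  proof -
    have xG: "x \<in> carrier G" and xd: "x [^] d = \<one>" using x by (auto simp: Dset_def)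
    have "x [^] (d - 1) \<otimes> x = \<one>" using xG xd d0 nat_pow_Suc[of x "d - 1"] by simp
    then have "inv x = x [^] (d - 1)" using xG by (simp add: inv_equality)
    then show ?thesis using pw[OF x] by simp
  qed
  show ?thesis
  proof (rule subgroupI)
    show "Dset G d \<subseteq> carrier G" by (auto simp: Dset_def)
    show "Dset G d \<noteq> {}" using one by blast
  qed (use inv cl in auto)
qed

end

lemma cycset_restrict:
  assumes "group G" "cycset G Q" shows "cycset (G\<lparr>carrier := K\<rparr>) Q"
proof -
  obtain \<gamma> where g: "\<gamma> \<in> Q" "Q = range (\<lambda>i::nat. \<gamma> [^]\<^bsub>G\<^esub> i)" using assms(2) unfolding cycset_def by blast
  have "(\<lambda>i::nat. \<gamma> [^]\<^bsub>G\<lparr>carrier := K\<rparr>\<^esub> i) = (\<lambda>i::nat. \<gamma> [^]\<^bsub>G\<^esub> i)"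
    by (rule ext) (rule monoid.nat_pow_consistent[OF group.is_monoid[OF assms(1)], symmetric])
  then have "Q = range (\<lambda>i::nat. \<gamma> [^]\<^bsub>G\<lparr>carrier := K\<rparr>\<^esub> i)" using g(2) by simp
  then show ?thesis using g(1) unfolding cycset_def by blast
qed

theorem tower:
  "zgroup G \<Longrightarrow> tdiv (order G) d \<Longrightarrow> subgroup (Dset G d) G \<and> card (Dset G d) = d"
proof (induction "order G" arbitrary: G d rule: less_induct)
  case less
  interpret G: group G using less.prems zgroup_def by blast
  have fin: "finite (carrier G)" using less.prems zgroup_def by blast
  define n where "n = order G"
  have n0: "n > 0" using fin n_def by (simp add: G.order_gt_0_iff_finite)
  have dn: "d dvd n" using less.prems n_def by (simp add: tdiv_def)
  have d0: "d > 0" using dn n0 by (metis dvd_0_left_iff gr0I)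
  show ?case
  proof (cases "n = 1")
    case True
    then have d1: "d = 1" using dn by simp
    have c1: "carrier G = {\<one>\<^bsub>G\<^esub>}"
      using True n_def G.one_closed fin unfolding order_def by (metis card_1_singletonE singletonD)
    have "Dset G d = carrier G" using d1 c1 by (auto simp: Dset_def)
    then show ?thesis using d1 True n_def G.subgroup_self by (simp add: order_def)
  next
    case False
    have ex: "\<exists>q. Factorial_Ring.prime q \<and> q dvd n" using False prime_factor_nat by blast
    define p where "p = (LEAST q. Factorial_Ring.prime q \<and> q dvd n)"
    have pp: "Factorial_Ring.prime p \<and> p dvd n" unfolding p_def using ex by (rule LeastI_ex)
    have p: "Factorial_Ring.prime p" and pn: "p dvd n" using pp by auto
    have pmin: "\<And>q. Factorial_Ring.prime q \<Longrightarrow> q dvd order G \<Longrightarrow> p \<le> q"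
      unfolding p_def n_def by (simp add: Least_le)
    define a where "a = multiplicity p n"
    define m where "m = n div p ^ a"
    have nm: "n = p ^ a * m" unfolding m_def a_def by (simp add: multiplicity_dvd)
    have pm: "\<not> p dvd m" unfolding m_def a_def
      using multiplicity_decompose[of n p] n0 p prime_gt_1_nat by force
    have m0: "m > 0" using nm n0 by (metis gr0I mult_0_right)
    have a0: "a \<noteq> 0"
    proof
      assume "a = 0"
      then have "n = m" using nm by simp
      then show False using pn pm by simp
    qed
    have mn: "m < n"
    proof -
      have "p > 1" using p prime_gt_1_nat by blast
      then have "p ^ a > 1" using a0 one_less_power by blast
      then show ?thesis using nm m0 by simp
    qed
    have syl: "sylow G p a m" unfolding sylow_def sylow_axioms_def
      using G.is_group p nm n_def fin by simp
    obtain P where subP: "subgroup P G" and cardP: "card P = p ^ a"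
      using sylow.sylow_thm[OF syl] by blast
    have "cycset G P" using less.prems subP cardP p unfolding zgroup_def a_def n_def by blast
    then obtain \<gamma> where gam: "\<gamma> \<in> P" and cyc: "P = range (\<lambda>i::nat. \<gamma> [^]\<^bsub>G\<^esub> i)"
      unfolding cycset_def by blast
    have PG: "P \<subseteq> carrier G" using subP subgroup.subset by blast
    have gG: "\<gamma> \<in> carrier G" using gam PG by blast
    have ordg: "G.ord \<gamma> = p ^ a" using G.cyc_card[OF fin gG] cyc cardP by simp
    have zpa: "z [^]\<^bsub>G\<^esub> (p ^ a) = \<one>\<^bsub>G\<^esub>" if zP: "z \<in> P" for z
      using G.cyc_pow_ord[OF gG] zP cyc ordg by simp
    have cardrc: "card (rcosets\<^bsub>G\<^esub> P) = m"
      using G.lagrange[OF subP] cardP nm n_def p prime_gt_0_nat by simp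
    have cpm: "coprime m p" using pm p by (metis prime_imp_coprime coprime_commute)
    have cpma: "coprime m (p ^ a)" using cpm by simp
    have comm: "\<And>x y. x \<in> P \<Longrightarrow> y \<in> P \<Longrightarrow> x \<otimes>\<^bsub>G\<^esub> y = y \<otimes>\<^bsub>G\<^esub> x"
    proof -
      fix x y assume "x \<in> P" "y \<in> P"
      then obtain i j :: nat where "x = \<gamma> [^]\<^bsub>G\<^esub> i" "y = \<gamma> [^]\<^bsub>G\<^esub> j" using cyc by blast
      then show "x \<otimes>\<^bsub>G\<^esub> y = y \<otimes>\<^bsub>G\<^esub> x" using gG by (simp add: G.nat_pow_mult add.commute)
    qed
    have fusion: "\<And>t y. t \<in> carrier G \<Longrightarrow> y \<in> P \<Longrightarrow> t \<otimes>\<^bsub>G\<^esub> y \<otimes>\<^bsub>G\<^esub> inv\<^bsub>G\<^esub> t \<in> P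
        \<Longrightarrow> t \<otimes>\<^bsub>G\<^esub> y \<otimes>\<^bsub>G\<^esub> inv\<^bsub>G\<^esub> t = y"
      using G.fusion_cyclic[OF fin p subP cardP gam cyc _ pmin] cardrc cpm by blast
    define V where "V = G.transfer_map P"
    have Vhom: "\<And>g h. g \<in> carrier G \<Longrightarrow> h \<in> carrier G \<Longrightarrow> V (g \<otimes>\<^bsub>G\<^esub> h) = V g \<otimes>\<^bsub>G\<^esub> V h"
      unfolding V_def using G.transfer_hom[OF fin subP comm] by blast
    have Vcl: "\<And>g. g \<in> carrier G \<Longrightarrow> V g \<in> P"
      unfolding V_def using G.transfer_closed[OF fin subP comm] by blast
    have VclG: "\<And>g. g \<in> carrier G \<Longrightarrow> V g \<in> carrier G" using Vcl PG by blast
    have Veval: "\<And>x. x \<in> P \<Longrightarrow> V x = x [^]\<^bsub>G\<^esub> m"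
      unfolding V_def using G.transfer_eval[OF fin subP comm fusion] cardrc by simp
    have V1: "V \<one>\<^bsub>G\<^esub> = \<one>\<^bsub>G\<^esub>" using G.hom_pow_aux(1)[OF Vhom VclG] .
    have Vpow: "\<And>x k. x \<in> carrier G \<Longrightarrow> V (x [^]\<^bsub>G\<^esub> (k::nat)) = V x [^]\<^bsub>G\<^esub> k"
      using G.hom_pow_aux(2)[OF Vhom VclG] by blast
    define PGr where "PGr = G\<lparr>carrier := P\<rparr>"
    have PGgrp: "group PGr" unfolding PGr_def using subgroup.subgroup_is_group[OF subP G.is_group] .
    have ghom: "group_hom G PGr V"
      unfolding group_hom_def group_hom_axioms_def hom_def using G.is_group PGgrp Vcl Vhom
      by (auto simp: PGr_def)
    obtain s u where su: "m * s = p ^ a * u + 1"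
      using bezout_nat[of m "p ^ a"] m0 cpma by (metis coprime_iff_gcd_eq_1 neq0_conv)
    have Vsurj: "V ` carrier G = P"
    proof
      show "V ` carrier G \<subseteq> P" using Vcl by blast
      show "P \<subseteq> V ` carrier G"
      proof
        fix z assume zP: "z \<in> P"
        have zG: "z \<in> carrier G" using zP PG by blast
        have zs: "z [^]\<^bsub>G\<^esub> s \<in> P" using G.pow_P[OF fin subP comm zP] .
        have "V (z [^]\<^bsub>G\<^esub> s) = (z [^]\<^bsub>G\<^esub> s) [^]\<^bsub>G\<^esub> m" using Veval zs by simp
        also have "\<dots> = z [^]\<^bsub>G\<^esub> (p ^ a * u + 1)" using zG su by (simp add: G.nat_pow_pow mult.commute)
        also have "\<dots> = z" using zG zpa[OF zP]
          by (simp add: G.nat_pow_mult[symmetric] G.nat_pow_pow[symmetric])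
        finally show "z \<in> V ` carrier G" using zs PG by force
      qed
    qed
    define K where "K = kernel G PGr V"
    have subK: "subgroup K G" unfolding K_def using group_hom.subgroup_kernel[OF ghom] .
    have KG: "K \<subseteq> carrier G" using subK subgroup.subset by blast
    have Kmem: "x \<in> K \<longleftrightarrow> x \<in> carrier G \<and> V x = \<one>\<^bsub>G\<^esub>" for x
      by (simp add: K_def kernel_def PGr_def)
    have fib: "\<And>Y. Y \<subseteq> P \<Longrightarrow> card {g \<in> carrier G. V g \<in> Y} = card K * card Y"
      using group_hom.fiber_card[OF ghom fin] Vsurj unfolding K_def by auto
    have "card K * p ^ a = n"
    proof -
      have "{g \<in> carrier G. V g \<in> P} = carrier G" using Vcl by blast
      then show ?thesis using fib[of P] cardP n_def by (simp add: order_def)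
    qed
    then have cardK: "card K = m" using nm p prime_gt_0_nat by simp
    define KGr where "KGr = G\<lparr>carrier := K\<rparr>"
    have KGgrp: "group KGr" unfolding KGr_def using subgroup.subgroup_is_group[OF subK G.is_group] .
    have oK: "order KGr = m" unfolding KGr_def order_def using cardK by simp
    have powK: "\<And>x k. x [^]\<^bsub>KGr\<^esub> (k::nat) = x [^]\<^bsub>G\<^esub> k"
      unfolding KGr_def using G.nat_pow_consistent by simp
    have Kpow: "\<And>x. x \<in> K \<Longrightarrow> x [^]\<^bsub>G\<^esub> m = \<one>\<^bsub>G\<^esub>"
      using group.pow_order_eq_1[OF KGgrp] oK powK by (simp add: KGr_def)
    have zK: "zgroup KGr"
    proof -
      have "cycset KGr Q" if q: "Factorial_Ring.prime q" and Q: "subgroup Q KGr"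
        and cQ: "card Q = q ^ multiplicity q (order KGr)" for q Q
      proof -
        have QG: "subgroup Q G" using G.incl_subgroup[OF subK] Q unfolding KGr_def by blast
        have "cycset G Q"
        proof (cases "q = p")
          case True
          then have "card Q = 1" using cQ oK pm by (simp add: not_dvd_imp_multiplicity_0)
          moreover have "\<one>\<^bsub>G\<^esub> \<in> Q" using QG subgroup.one_closed by blast
          ultimately have "Q = {\<one>\<^bsub>G\<^esub>}" by (metis card_1_singletonE singletonD)
          then show ?thesis unfolding cycset_def by auto
        next
          case False
          have "multiplicity q m = multiplicity q n"
            using False p q nm m0 prime_gt_0_nat
            by (simp add: prime_elem_multiplicity_mult_distrib multiplicity_distinct_prime_power)
          then have "card Q = q ^ multiplicity q (order G)" using cQ oK n_def by simp
          then show ?thesis using less.prems q QG unfolding zgroup_def by blast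
        qed
        then show ?thesis unfolding KGr_def using cycset_restrict G.is_group by blast
      qed
      moreover have "finite (carrier KGr)" using fin KG finite_subset unfolding KGr_def by auto
      ultimately show ?thesis unfolding zgroup_def using KGgrp by blast
    qed
    show ?thesis
    proof (cases "p dvd d")
      case True
      obtain i where di: "d = m * p ^ i" and ia: "i \<le> a"
        using tdiv_split[OF _ nm p pm True m0] less.prems n_def pmin by blast
      define Y where "Y = {z \<in> P. z [^]\<^bsub>G\<^esub> (p ^ i) = \<one>\<^bsub>G\<^esub>}"
      have cY: "card Y = p ^ i" unfolding Y_def using G.cyc_count[OF fin gG p ordg ia] cyc by simp
      have DY: "Dset G d = {g \<in> carrier G. V g \<in> Y}"
      proof (rule Set.set_eqI, rule iffI)
        fix g assume g: "g \<in> Dset G d"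
        then have gG: "g \<in> carrier G" and gd: "g [^]\<^bsub>G\<^esub> d = \<one>\<^bsub>G\<^esub>" by (auto simp: Dset_def)
        have VgP: "V g \<in> P" using Vcl gG .
        have VgG: "V g \<in> carrier G" using VgP PG by blast
        define z where "z = V g [^]\<^bsub>G\<^esub> (p ^ i)"
        have zG: "z \<in> carrier G" using VgG z_def by simp
        have "z [^]\<^bsub>G\<^esub> m = V (g [^]\<^bsub>G\<^esub> d)"
          using Vpow gG di z_def VgG by (simp add: G.nat_pow_pow mult.commute)
        then have zm: "z [^]\<^bsub>G\<^esub> m = \<one>\<^bsub>G\<^esub>" using gd V1 by simp
        have "z [^]\<^bsub>G\<^esub> (p ^ a) = V g [^]\<^bsub>G\<^esub> (p ^ i * p ^ a)" using VgG z_def by (simp add: G.nat_pow_pow)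
        also have "\<dots> = (V g [^]\<^bsub>G\<^esub> (p ^ a)) [^]\<^bsub>G\<^esub> (p ^ i)" using VgG by (simp add: G.nat_pow_pow mult.commute)
        also have "\<dots> = \<one>\<^bsub>G\<^esub>" using zpa[OF VgP] by simp
        finally have zp: "z [^]\<^bsub>G\<^esub> (p ^ a) = \<one>\<^bsub>G\<^esub>" .
        have "z = \<one>\<^bsub>G\<^esub>" using G.coprime_pow_one[OF zG zm zp cpma m0] .
        then show "g \<in> {g \<in> carrier G. V g \<in> Y}" using gG VgP z_def Y_def by simp
      next
        fix g assume g: "g \<in> {g \<in> carrier G. V g \<in> Y}"
        then have gG: "g \<in> carrier G" and VY: "V g [^]\<^bsub>G\<^esub> (p ^ i) = \<one>\<^bsub>G\<^esub>" by (auto simp: Y_def)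
        have "V (g [^]\<^bsub>G\<^esub> (p ^ i)) = \<one>\<^bsub>G\<^esub>" using Vpow gG VY by simp
        then have "g [^]\<^bsub>G\<^esub> (p ^ i) \<in> K" using Kmem gG by simp
        then have "(g [^]\<^bsub>G\<^esub> (p ^ i)) [^]\<^bsub>G\<^esub> m = \<one>\<^bsub>G\<^esub>" using Kpow by blast
        then have "g [^]\<^bsub>G\<^esub> d = \<one>\<^bsub>G\<^esub>" using gG di by (simp add: G.nat_pow_pow mult.commute)
        then show "g \<in> Dset G d" using gG by (simp add: Dset_def)
      qed
      have YP: "Y \<subseteq> P" unfolding Y_def by blast
      have card: "card (Dset G d) = d" using DY fib[OF YP] cardK cY di by simp
      have sub: "subgroup (Dset G d) G"
      proof (rule G.Dset_subgroupI[OF d0])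
        fix x y assume x: "x \<in> Dset G d" and y: "y \<in> Dset G d"
        have xG: "x \<in> carrier G" and xY: "V x \<in> Y" using x DY by auto
        have yG: "y \<in> carrier G" and yY: "V y \<in> Y" using y DY by auto
        have VxP: "V x \<in> P" and VyP: "V y \<in> P" using xY yY YP by auto
        have VxG: "V x \<in> carrier G" and VyG: "V y \<in> carrier G" using VxP VyP PG by auto
        have "(V x \<otimes>\<^bsub>G\<^esub> V y) [^]\<^bsub>G\<^esub> (p ^ i) = V x [^]\<^bsub>G\<^esub> (p ^ i) \<otimes>\<^bsub>G\<^esub> V y [^]\<^bsub>G\<^esub> (p ^ i)"
          using G.pow_mult_distrib[OF comm[OF VxP VyP] VxG VyG] .
        also have "\<dots> = \<one>\<^bsub>G\<^esub>" using xY yY Y_def by simp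
        finally have "V (x \<otimes>\<^bsub>G\<^esub> y) \<in> Y"
          using Vhom[OF xG yG] Y_def subgroup.m_closed[OF subP VxP VyP] by simp
        then show "x \<otimes>\<^bsub>G\<^esub> y \<in> Dset G d" using DY xG yG by simp
      qed
      show ?thesis using sub card by simp
    next
      case False
      have tm: "tdiv (order KGr) d" using tdiv_coprime[OF _ nm p pm False m0] less.prems n_def oK by simp
      have IH: "subgroup (Dset KGr d) KGr \<and> card (Dset KGr d) = d"
        using less.hyps[of KGr d] mn oK n_def zK tm by simp
      have eqD: "Dset KGr d = Dset G d"
      proof (rule Set.set_eqI, rule iffI)
        fix x assume "x \<in> Dset KGr d"
        then show "x \<in> Dset G d" using powK KG by (auto simp: Dset_def KGr_def)
      next
        fix x assume x: "x \<in> Dset G d"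
        then have xG: "x \<in> carrier G" and xd: "x [^]\<^bsub>G\<^esub> d = \<one>\<^bsub>G\<^esub>" by (auto simp: Dset_def)
        have VxP: "V x \<in> P" using Vcl xG .
        have VxG: "V x \<in> carrier G" using VxP PG by blast
        have "V x [^]\<^bsub>G\<^esub> d = \<one>\<^bsub>G\<^esub>" using Vpow[OF xG] xd V1 by metis
        moreover have "coprime d (p ^ a)" using False p by (metis coprime_commute coprime_power_right_iff prime_imp_coprime)
        ultimately have "V x = \<one>\<^bsub>G\<^esub>" using G.coprime_pow_one[OF VxG _ zpa[OF VxP] _ d0] by blast
        then have "x \<in> K" using Kmem xG by simp
        then show "x \<in> Dset KGr d" using powK xd by (simp add: Dset_def KGr_def)
      qed
      have "subgroup (Dset G d) G" using IH eqD G.incl_subgroup[OF subK] unfolding KGr_def by simp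
      then show ?thesis using IH eqD by simp
    qed
  qed
qed


lemma cyc_conv:
  assumes G: "group G" and fin: "finite (carrier G)" and Q: "subgroup Q G"
    and cyc: "cyclic_group (subgroup_generated G Q)"
  shows "cycset G Q"
proof -
  have cQ: "carrier (subgroup_generated G Q) = Q" using subgroup.carrier_subgroup_generated_subgroup[OF Q] .
  have HQ: "subgroup_generated G Q = G\<lparr>carrier := Q\<rparr>"
    using cQ by (simp add: subgroup_generated_def carrier_subgroup_generated)
  define H where "H = G\<lparr>carrier := Q\<rparr>"
  have Hg: "group H" unfolding H_def using subgroup.subgroup_is_group[OF Q G] .
  have finH: "finite (carrier H)" unfolding H_def using fin Q subgroup.subset finite_subset by fastforce
  obtain x where x: "x \<in> carrier H" and xg: "subgroup_generated H {x} = H"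
    using cyc HQ H_def unfolding cyclic_group_def by auto
  have "carrier H = generate H {x}"
    using arg_cong[OF xg, of carrier] x by (simp add: carrier_subgroup_generated)
  also have "\<dots> = {x [^]\<^bsub>H\<^esub> k | k. k \<in> (UNIV :: nat set)}"
    using group.generate_pow_on_finite_carrier[OF Hg finH x] .
  finally have "Q = {x [^]\<^bsub>G\<^esub> k | k. k \<in> (UNIV :: nat set)}"
    unfolding H_def using monoid.nat_pow_consistent[OF group.is_monoid[OF G]] by simp
  then have "Q = range (\<lambda>k::nat. x [^]\<^bsub>G\<^esub> k)" by auto
  moreover have "x \<in> Q" using x H_def by simp
  ultimately show ?thesis unfolding cycset_def by blast
qed

lemma zgroup_from_sylow:
  assumes G: "group G" and fin: "finite (carrier G)"
    and hyp: "\<And>p P. sylow_subgroup G p P \<Longrightarrow> cyclic_group (subgroup_generated G P)"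
  shows "zgroup G"
  unfolding zgroup_def using G fin hyp cyc_conv unfolding sylow_subgroup_def by blast

context group begin

lemma finite_closed_subgroup:
  assumes fin: "finite (carrier G)" and S: "S \<subseteq> carrier G" and one: "\<one> \<in> S"
    and cl: "\<And>x y. x \<in> S \<Longrightarrow> y \<in> S \<Longrightarrow> x \<otimes> y \<in> S"
  shows "subgroup S G"
proof -
  have pw: "x [^] (j::nat) \<in> S" if x: "x \<in> S" for x j
  proof (induction j)
    case 0 then show ?case using one by simp
  next
    case (Suc j)
    have "x [^] Suc j = x [^] j \<otimes> x" using x S by auto
    then show ?case using cl[OF Suc x] by simp
  qed
  have inv: "inv x \<in> S" if x: "x \<in> S" for x
  proof -
    have xG: "x \<in> carrier G" using x S by blast
    have o1: "ord x \<ge> 1" using ord_ge_1[OF fin xG] .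
    have "x [^] (ord x - 1) \<otimes> x = \<one>" using xG o1 nat_pow_Suc[of x "ord x - 1"] by simp
    then have "inv x = x [^] (ord x - 1)" using xG by (simp add: inv_equality)
    then show ?thesis using pw[OF x] by simp
  qed
  show ?thesis
  proof (rule subgroupI)
    show "S \<subseteq> carrier G" using S .
    show "S \<noteq> {}" using one by blast
  qed (use inv cl in auto)
qed

lemma Dset_normal:
  assumes "subgroup (Dset G d) G" shows "Dset G d \<lhd> G"
proof -
  have "x \<otimes> h \<otimes> inv x \<in> Dset G d" if x: "x \<in> carrier G" and h: "h \<in> Dset G d" for x h
  proof -
    have hG: "h \<in> carrier G" and hd: "h [^] d = \<one>" using h by (auto simp: Dset_def)
    have "(x \<otimes> h \<otimes> inv x) [^] d = \<one>" using conj_pow[OF x hG] hd x by simp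
    then show ?thesis using x hG by (simp add: Dset_def)
  qed
  then show ?thesis using assms normal_inv_iff by blast
qed

end

lemma factor_cosets_card:
  assumes A: "group A" and fin: "finite (carrier A)" and I: "subgroup I A" and J: "subgroup J A"
    and IJ: "I \<subseteq> J"
  shows "card (factor_cosets A I J) * card I = card J"
proof -
  define H where "H = A\<lparr>carrier := J\<rparr>"
  have Hg: "group H" unfolding H_def using subgroup.subgroup_is_group[OF J A] .
  have IH: "subgroup I H" unfolding H_def using group.subgroup_incl[OF A I J IJ] .
  have "rcosets\<^bsub>H\<^esub> I = factor_cosets A I J"
    unfolding factor_cosets_def RCOSETS_def r_coset_def H_def by auto
  moreover have "card (rcosets\<^bsub>H\<^esub> I) * card I = order H" using group.lagrange[OF Hg IH] .
  moreover have "order H = card J" unfolding H_def order_def by simp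
  ultimately show ?thesis by simp
qed


context
  fixes A M :: "'a monoid"
  assumes br: "brace A M" and fin: "finite (carrier A)"
    and hA: "\<And>p P. sylow_subgroup A p P \<Longrightarrow> cyclic_group (subgroup_generated A P)"
    and hM: "\<And>p P. sylow_subgroup M p P \<Longrightarrow> cyclic_group (subgroup_generated M P)"
begin

lemma grpA: "group A" using br brace_def by blast
lemma grpM: "group M" using br brace_def by blast
lemma carr: "carrier M = carrier A" using br brace_def by metis
lemma one_eq: "\<one>\<^bsub>M\<^esub> = \<one>\<^bsub>A\<^esub>" using br brace_def by metis
lemma dist: "a \<in> carrier A \<Longrightarrow> b \<in> carrier A \<Longrightarrow> c \<in> carrier A \<Longrightarrow>
   a \<otimes>\<^bsub>M\<^esub> (b \<otimes>\<^bsub>A\<^esub> c) = (a \<otimes>\<^bsub>M\<^esub> b) \<otimes>\<^bsub>A\<^esub> inv\<^bsub>A\<^esub> a \<otimes>\<^bsub>A\<^esub> (a \<otimes>\<^bsub>M\<^esub> c)"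
  using br unfolding brace_def by blast
lemma finM: "finite (carrier M)" using fin carr by simp
lemma ordM: "order M = order A" unfolding order_def using carr by simp

interpretation A: group A by (rule grpA)
interpretation M: group M by (rule grpM)

lemma mM_closed: "a \<in> carrier A \<Longrightarrow> b \<in> carrier A \<Longrightarrow> a \<otimes>\<^bsub>M\<^esub> b \<in> carrier A"
  using M.m_closed carr by metis

lemma lam_closed: "a \<in> carrier A \<Longrightarrow> b \<in> carrier A \<Longrightarrow> brace_lambda A M a b \<in> carrier A"
  unfolding brace_lambda_def using mM_closed by simp

lemma lam_hom:
  assumes a: "a \<in> carrier A" and b: "b \<in> carrier A" and c: "c \<in> carrier A"
  shows "brace_lambda A M a (b \<otimes>\<^bsub>A\<^esub> c) = brace_lambda A M a b \<otimes>\<^bsub>A\<^esub> brace_lambda A M a c"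
proof -
  have ab: "a \<otimes>\<^bsub>M\<^esub> b \<in> carrier A" and ac: "a \<otimes>\<^bsub>M\<^esub> c \<in> carrier A" using mM_closed a b c by auto
  have "brace_lambda A M a (b \<otimes>\<^bsub>A\<^esub> c) = inv\<^bsub>A\<^esub> a \<otimes>\<^bsub>A\<^esub> ((a \<otimes>\<^bsub>M\<^esub> b) \<otimes>\<^bsub>A\<^esub> inv\<^bsub>A\<^esub> a \<otimes>\<^bsub>A\<^esub> (a \<otimes>\<^bsub>M\<^esub> c))"
    unfolding brace_lambda_def using dist[OF a b c] by simp
  also have "\<dots> = brace_lambda A M a b \<otimes>\<^bsub>A\<^esub> brace_lambda A M a c"
    unfolding brace_lambda_def using a ab ac by (simp add: A.m_assoc)
  finally show ?thesis .
qed

lemma mult_lam: "a \<in> carrier A \<Longrightarrow> b \<in> carrier A \<Longrightarrow> a \<otimes>\<^bsub>M\<^esub> b = a \<otimes>\<^bsub>A\<^esub> brace_lambda A M a b"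
  unfolding brace_lambda_def using mM_closed by (simp add: A.m_assoc[symmetric])

lemma zA: "zgroup A" using zgroup_from_sylow[OF grpA fin hA] .
lemma zM: "zgroup M" using zgroup_from_sylow[OF grpM finM hM] .

lemma Dset_ideal:
  assumes t: "tdiv (order A) d"
  shows "brace_ideal A M (Dset A d) \<and> Dset M d = Dset A d \<and> card (Dset A d) = d"
proof -
  define D where "D = Dset A d"
  have tA: "subgroup D A \<and> card D = d" using tower[OF zA t] D_def by simp
  have tM: "subgroup (Dset M d) M \<and> card (Dset M d) = d" using tower[OF zM] t ordM by simp
  have DA: "D \<subseteq> carrier A" using tA subgroup.subset by blast
  have lam_inv: "brace_lambda A M b x \<in> D" if b: "b \<in> carrier A" and x: "x \<in> D" for b x
  proof -
    have xA: "x \<in> carrier A" and xd: "x [^]\<^bsub>A\<^esub> d = \<one>\<^bsub>A\<^esub>" using x D_def by (auto simp: Dset_def)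
    have h1: "\<And>y z. y \<in> carrier A \<Longrightarrow> z \<in> carrier A \<Longrightarrow>
        brace_lambda A M b (y \<otimes>\<^bsub>A\<^esub> z) = brace_lambda A M b y \<otimes>\<^bsub>A\<^esub> brace_lambda A M b z"
      using lam_hom b by blast
    have h2: "\<And>y. y \<in> carrier A \<Longrightarrow> brace_lambda A M b y \<in> carrier A" using lam_closed b by blast
    have "brace_lambda A M b x [^]\<^bsub>A\<^esub> d = brace_lambda A M b (x [^]\<^bsub>A\<^esub> d)"
      using A.hom_pow_aux(2)[OF h1 h2 xA] by simp
    also have "\<dots> = \<one>\<^bsub>A\<^esub>" using xd A.hom_pow_aux(1)[OF h1 h2] by simp
    finally show ?thesis using h2[OF xA] D_def by (simp add: Dset_def)
  qed
  have subM: "subgroup D M"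
  proof (rule M.finite_closed_subgroup[OF finM])
    show "D \<subseteq> carrier M" using DA carr by simp
    show "\<one>\<^bsub>M\<^esub> \<in> D" using one_eq tA subgroup.one_closed by metis
    fix x y assume x: "x \<in> D" and y: "y \<in> D"
    have "x \<otimes>\<^bsub>M\<^esub> y = x \<otimes>\<^bsub>A\<^esub> brace_lambda A M x y" using mult_lam x y DA by blast
    moreover have "brace_lambda A M x y \<in> D" using lam_inv x y DA by blast
    ultimately show "x \<otimes>\<^bsub>M\<^esub> y \<in> D" using subgroup.m_closed[of D A] tA x by simp
  qed
  have DsubM: "D \<subseteq> Dset M d"
  proof
    fix x assume x: "x \<in> D"
    define H where "H = M\<lparr>carrier := D\<rparr>"
    have Hg: "group H" unfolding H_def using subgroup.subgroup_is_group[OF subM grpM] .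
    have "x [^]\<^bsub>H\<^esub> order H = \<one>\<^bsub>H\<^esub>" using group.pow_order_eq_1[OF Hg] x H_def by simp
    then have "x [^]\<^bsub>M\<^esub> d = \<one>\<^bsub>M\<^esub>" using tA M.nat_pow_consistent unfolding H_def order_def by simp
    then show "x \<in> Dset M d" using x DA carr by (auto simp: Dset_def)
  qed
  have finDM: "finite (Dset M d)" using finM by (simp add: Dset_def)
  have eqM: "D = Dset M d" using card_subset_eq[OF finDM DsubM] tA tM by simp
  have nA: "D \<lhd> A" using A.Dset_normal[of d] tA by (simp add: D_def)
  have nM: "D \<lhd> M" using M.Dset_normal tM eqM by simp
  have "brace_ideal A M D"
    unfolding brace_ideal_def using tA subM nA nM lam_inv by blast
  then show ?thesis using eqM tA D_def by simp
qed

lemma Dset_mono: "x \<in> Dset A d' \<Longrightarrow> d' dvd d \<Longrightarrow> x \<in> Dset A d"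
  by (auto simp: Dset_def A.nat_pow_pow[symmetric] elim!: dvdE)

lemma chain:
  "tdiv (order A) d \<Longrightarrow> \<exists>(I :: nat \<Rightarrow> 'a set) k. I 0 = {\<one>\<^bsub>A\<^esub>} \<and> I k = Dset A d \<and>
     (\<forall>i\<le>k. brace_ideal A M (I i)) \<and>
     (\<forall>i<k. I i \<subseteq> I (Suc i) \<and> Factorial_Ring.prime (card (factor_cosets A (I i) (I (Suc i)))))"
proof (induction d rule: less_induct)
  case (less d)
  define n where "n = order A"
  have n0: "n > 0" using fin n_def by (simp add: A.order_gt_0_iff_finite)
  have dn: "d dvd n" using less.prems n_def by (simp add: tdiv_def)
  have d0: "d > 0" using dn n0 by (metis dvd_0_left_iff gr0I)
  show ?case
  proof (cases "d = 1")
    case True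
    have "Dset A d = {\<one>\<^bsub>A\<^esub>}" using True by (auto simp: Dset_def)
    moreover have "brace_ideal A M (Dset A d)" using Dset_ideal less.prems by blast
    ultimately show ?thesis by (intro exI[of _ "\<lambda>_. Dset A d"] exI[of _ 0]) simp
  next
    case False
    have ex: "\<exists>q. Factorial_Ring.prime q \<and> q dvd d" using False prime_factor_nat by blast
    define q where "q = (LEAST q. Factorial_Ring.prime q \<and> q dvd d)"
    have qq: "Factorial_Ring.prime q \<and> q dvd d" unfolding q_def using ex by (rule LeastI_ex)
    have q: "Factorial_Ring.prime q" and qd: "q dvd d" using qq by auto
    have qmin: "\<And>r. Factorial_Ring.prime r \<Longrightarrow> r dvd d \<Longrightarrow> q \<le> r"
      unfolding q_def by (simp add: Least_le)
    define d' where "d' = d div q"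
    have dd': "d = d' * q" using qd d'_def by simp
    have q1: "q > 1" using q prime_gt_1_nat by blast
    have d'0: "d' > 0" using dd' d0 by (metis gr0I mult_0)
    have lt: "d' < d" using dd' q1 d'0 by simp
    have t': "tdiv (order A) d'"
    proof -
      have "d' dvd n" using dn dd' by (metis dvd_mult_left)
      moreover have "multiplicity r d' = multiplicity r n"
        if q1': "Factorial_Ring.prime q1" and r: "Factorial_Ring.prime r" and qd': "q1 dvd d'"
          and rn: "r dvd n" and qr: "q1 < r" for q1 r
      proof -
        have "q1 dvd d" using qd' dd' by simp
        then have "q \<le> q1" using qmin q1' by blast
        then have rq: "r \<noteq> q" using qr by simp
        have "multiplicity r d = multiplicity r d'"
          using dd' rq r q d'0 prime_gt_0_nat
          by (simp add: prime_elem_multiplicity_mult_distrib prime_multiplicity_other)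
        moreover have "multiplicity r d = multiplicity r n"
          using less.prems n_def q1' r \<open>q1 dvd d\<close> rn qr by (simp add: tdiv_def)
        ultimately show ?thesis by simp
      qed
      ultimately show ?thesis using n_def by (simp add: tdiv_def)
    qed
    obtain I k where I0: "I 0 = {\<one>\<^bsub>A\<^esub>}" and Ik: "I k = Dset A d'"
      and Iid: "\<forall>i\<le>k. brace_ideal A M (I i)"
      and Ist: "\<forall>i<k. I i \<subseteq> I (Suc i) \<and> Factorial_Ring.prime (card (factor_cosets A (I i) (I (Suc i))))"
      using less.IH[OF lt t'] by blast
    define J where "J = I(Suc k := Dset A d)"
    have J0: "J 0 = {\<one>\<^bsub>A\<^esub>}" using I0 J_def by simp
    have Jk: "J (Suc k) = Dset A d" using J_def by simp
    have idd: "brace_ideal A M (Dset A d)" using Dset_ideal less.prems by blast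
    have id': "Dset A d' \<subseteq> Dset A d" using Dset_mono dd' by (metis dvd_triv_left subsetI)
    have sub1: "subgroup (Dset A d) A" and sub2: "subgroup (Dset A d') A"
      using Dset_ideal less.prems t' unfolding brace_ideal_def by blast+
    have c1: "card (Dset A d) = d" and c2: "card (Dset A d') = d'"
      using Dset_ideal less.prems t' by blast+
    have "card (factor_cosets A (Dset A d') (Dset A d)) * d' = d"
      using factor_cosets_card[OF grpA fin sub2 sub1 id'] c1 c2 by simp
    then have cf: "card (factor_cosets A (Dset A d') (Dset A d)) = q" using dd' d'0 by simp
    show ?thesis
    proof (intro exI[of _ J] exI[of _ "Suc k"] conjI)
      show "J 0 = {\<one>\<^bsub>A\<^esub>}" using J0 .
      show "J (Suc k) = Dset A d" using Jk .
      show "\<forall>i\<le>Suc k. brace_ideal A M (J i)"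
        using Iid idd J_def by (auto simp: le_Suc_eq)
      show "\<forall>i<Suc k. J i \<subseteq> J (Suc i) \<and> Factorial_Ring.prime (card (factor_cosets A (J i) (J (Suc i))))"
      proof (intro allI impI)
        fix i assume i: "i < Suc k"
        show "J i \<subseteq> J (Suc i) \<and> Factorial_Ring.prime (card (factor_cosets A (J i) (J (Suc i))))"
        proof (cases "i = k")
          case True
          then show ?thesis using Ik id' cf q J_def by simp
        next
          case False
          then have "i < k" using i by simp
          then show ?thesis using Ist J_def by simp
        qed
      qed
    qed
  qed
qed

lemma final: "brace_supersoluble A M"
proof -
  have t: "tdiv (order A) (order A)" by (simp add: tdiv_def)
  obtain I k where I0: "I 0 = {\<one>\<^bsub>A\<^esub>}" and Ik: "I k = Dset A (order A)"
      and Iid: "\<forall>i\<le>k. brace_ideal A M (I i)"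
      and Ist: "\<forall>i<k. I i \<subseteq> I (Suc i) \<and> Factorial_Ring.prime (card (factor_cosets A (I i) (I (Suc i))))"
    using chain[OF t] by blast
  have "Dset A (order A) = carrier A" using A.pow_order_eq_1 by (auto simp: Dset_def)
  then have Ik': "I k = carrier A" using Ik by simp
  show ?thesis unfolding brace_supersoluble_def
    using I0 Ik' Iid Ist by (intro exI[of _ I] exI[of _ k]) (auto simp: Let_def)
qed

end

theorem theorem3p8:
  fixes A M :: "'a monoid"
  assumes "brace A M"
    and "finite (carrier A)"
    and "\<And>p P. sylow_subgroup A p P \<Longrightarrow> cyclic_group (subgroup_generated A P)"
    and "\<And>p P. sylow_subgroup M p P \<Longrightarrow> cyclic_group (subgroup_generated M P)"
  shows "brace_supersoluble A M"
  using final[OF assms] .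


end
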